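(* Let $(M^4,g)$ be an oriented Einstein $4$-manifold whose sectional curvature is semi-definite (i.e. either $\sec_g\ge 0$ everywhere or $\sec_g\le 0$ everywhere). Then at every point of $M$ \[ \frac{|s_g|}{\sqrt{6}}\geq |W^+|+|W^-|. \] *)

theory Defs
  imports Complex_Main
begin

text \<open>Pointwise (algebraic) model of the curvature of an oriented Riemannian 4-manifold.
  At each point the Riemann curvature tensor is given by its components
  R i j k l (i,j,k,l in {0,1,2,3}) with respect to a positively oriented orthonormal frame
  of the tangent space.  Convention: R i j i j is the sectional curvature of the plane
  spanned by e_i, e_j (i ~= j).\<close>

type_synonym tensor4 = "nat \<Rightarrow> nat \<Rightarrow> nat \<Rightarrow> nat \<Rightarrow> real"

definition idx :: "nat set" where "idx = {..<4}"

definition kdelta :: "nat \<Rightarrow> nat \<Rightarrow> real" where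
  "kdelta i j = (if i = j then 1 else 0)"

definition alg_curv :: "tensor4 \<Rightarrow> bool" where
  "alg_curv R \<longleftrightarrow> (\<forall>i\<in>idx. \<forall>j\<in>idx. \<forall>k\<in>idx. \<forall>l\<in>idx.
      R i j k l = - R j i k l \<and> R i j k l = - R i j l k \<and> R i j k l = R k l i j \<and>
      R i j k l + R j k i l + R k i j l = 0)"

definition inner4 :: "(nat \<Rightarrow> real) \<Rightarrow> (nat \<Rightarrow> real) \<Rightarrow> real" where
  "inner4 x y = (\<Sum>i\<in>idx. x i * y i)"

definition lin_indep2 :: "(nat \<Rightarrow> real) \<Rightarrow> (nat \<Rightarrow> real) \<Rightarrow> bool" where
  "lin_indep2 x y \<longleftrightarrow> (\<forall>a b. (\<forall>i\<in>idx. a * x i + b * y i = 0) \<longrightarrow> a = 0 \<and> b = 0)"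

definition sec_curv :: "tensor4 \<Rightarrow> (nat \<Rightarrow> real) \<Rightarrow> (nat \<Rightarrow> real) \<Rightarrow> real" where
  "sec_curv R x y =
     (\<Sum>i\<in>idx. \<Sum>j\<in>idx. \<Sum>k\<in>idx. \<Sum>l\<in>idx. R i j k l * x i * y j * x k * y l)
     / (inner4 x x * inner4 y y - (inner4 x y)^2)"

definition ricci :: "tensor4 \<Rightarrow> nat \<Rightarrow> nat \<Rightarrow> real" where
  "ricci R i k = (\<Sum>j\<in>idx. R i j k j)"

definition scal :: "tensor4 \<Rightarrow> real" where
  "scal R = (\<Sum>i\<in>idx. ricci R i i)"

definition einstein_at :: "tensor4 \<Rightarrow> bool" where
  "einstein_at R \<longleftrightarrow> (\<exists>c. \<forall>i\<in>idx. \<forall>k\<in>idx. ricci R i k = c * kdelta i k)"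

definition weyl :: "tensor4 \<Rightarrow> tensor4" where
  "weyl R i j k l = R i j k l
     - (1/2) * (ricci R i k * kdelta j l + ricci R j l * kdelta i k
                - ricci R i l * kdelta j k - ricci R j k * kdelta i l)
     + (scal R / 6) * (kdelta i k * kdelta j l - kdelta i l * kdelta j k)"

text \<open>Levi-Civita symbol for the orientation of the frame (epsilon 0 1 2 3 = 1).\<close>
definition eps :: "nat \<Rightarrow> nat \<Rightarrow> nat \<Rightarrow> nat \<Rightarrow> real" where
  "eps i j k l = (if i < 4 \<and> j < 4 \<and> k < 4 \<and> l < 4 then
      of_int (sgn (int j - int i) * sgn (int k - int i) * sgn (int l - int i)
            * sgn (int k - int j) * sgn (int l - int j) * sgn (int l - int k))
    else 0)"

text \<open>Identity and Hodge star on 2-forms in 4-index form, and projections onto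
  self-dual / anti-self-dual 2-forms.\<close>
definition id2 :: tensor4 where
  "id2 i j a b = (kdelta i a * kdelta j b - kdelta i b * kdelta j a) / 2"

definition hodge2 :: tensor4 where
  "hodge2 i j a b = eps i j a b / 2"

definition proj_plus :: tensor4 where
  "proj_plus i j a b = (id2 i j a b + hodge2 i j a b) / 2"

definition proj_minus :: tensor4 where
  "proj_minus i j a b = (id2 i j a b - hodge2 i j a b) / 2"

text \<open>W^+ = P_+ W P_+, W^- = P_- W P_- (as operators on 2-forms).\<close>
definition sandwich :: "tensor4 \<Rightarrow> tensor4 \<Rightarrow> tensor4" where
  "sandwich P T i j k l =
     (\<Sum>a\<in>idx. \<Sum>b\<in>idx. \<Sum>c\<in>idx. \<Sum>d\<in>idx. P i j a b * T a b c d * P c d k l)"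

definition weyl_plus :: "tensor4 \<Rightarrow> tensor4" where
  "weyl_plus R = sandwich proj_plus (weyl R)"

definition weyl_minus :: "tensor4 \<Rightarrow> tensor4" where
  "weyl_minus R = sandwich proj_minus (weyl R)"

text \<open>Norm of a curvature-type tensor viewed as a self-adjoint endomorphism of the space of
  2-forms (orthonormal basis e_i wedge e_j, i<j): |T|^2 = (1/4) sum_{ijkl} T_{ijkl}^2.\<close>
definition norm2form :: "tensor4 \<Rightarrow> real" where
  "norm2form T = sqrt ((1/4) * (\<Sum>i\<in>idx. \<Sum>j\<in>idx. \<Sum>k\<in>idx. \<Sum>l\<in>idx. (T i j k l)^2))"

end

theory Submission
  imports Defs
begin

lemma idx4: "idx = {0,1,2,3}" by (auto simp: idx_def)
lemma sum_idx: "sum f idx = f 0 + f 1 + f 2 + f 3"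
  by (simp add: idx4 add.assoc)
lemma ball_idx: "(\<forall>i\<in>idx. P i) \<longleftrightarrow> P 0 \<and> P 1 \<and> P 2 \<and> P 3"
  by (simp add: idx4)

lemma sandwich_nest:
  "sandwich P T i j k l = (\<Sum>a\<in>idx. \<Sum>b\<in>idx. P i j a b * (\<Sum>c\<in>idx. \<Sum>d\<in>idx. T a b c d * P c d k l))"
  by (simp add: sandwich_def sum_distrib_left mult.assoc)

lemma Lplus_00: "(\<Sum>a\<in>idx. \<Sum>b\<in>idx. proj_plus 0 0 a b * g a b) = 0"
  by (simp add: sum_idx proj_plus_def id2_def hodge2_def eps_def kdelta_def)

lemma Rplus_00: "(\<Sum>a\<in>idx. \<Sum>b\<in>idx. g a b * proj_plus a b 0 0) = 0"
  by (simp add: sum_idx proj_plus_def id2_def hodge2_def eps_def kdelta_def)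

lemma Lplus_01: "(\<Sum>a\<in>idx. \<Sum>b\<in>idx. proj_plus 0 1 a b * g a b) = (1/4) * g 0 1 - (1/4) * g 1 0 + (1/4) * g 2 3 - (1/4) * g 3 2"
  by (simp add: sum_idx proj_plus_def id2_def hodge2_def eps_def kdelta_def)

lemma Rplus_01: "(\<Sum>a\<in>idx. \<Sum>b\<in>idx. g a b * proj_plus a b 0 1) = (1/4) * g 0 1 - (1/4) * g 1 0 + (1/4) * g 2 3 - (1/4) * g 3 2"
  by (simp add: sum_idx proj_plus_def id2_def hodge2_def eps_def kdelta_def)

lemma Lplus_02: "(\<Sum>a\<in>idx. \<Sum>b\<in>idx. proj_plus 0 2 a b * g a b) = (1/4) * g 0 2 - (1/4) * g 1 3 - (1/4) * g 2 0 + (1/4) * g 3 1"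
  by (simp add: sum_idx proj_plus_def id2_def hodge2_def eps_def kdelta_def)

lemma Rplus_02: "(\<Sum>a\<in>idx. \<Sum>b\<in>idx. g a b * proj_plus a b 0 2) = (1/4) * g 0 2 - (1/4) * g 1 3 - (1/4) * g 2 0 + (1/4) * g 3 1"
  by (simp add: sum_idx proj_plus_def id2_def hodge2_def eps_def kdelta_def)

lemma Lplus_03: "(\<Sum>a\<in>idx. \<Sum>b\<in>idx. proj_plus 0 3 a b * g a b) = (1/4) * g 0 3 + (1/4) * g 1 2 - (1/4) * g 2 1 - (1/4) * g 3 0"
  by (simp add: sum_idx proj_plus_def id2_def hodge2_def eps_def kdelta_def)

lemma Rplus_03: "(\<Sum>a\<in>idx. \<Sum>b\<in>idx. g a b * proj_plus a b 0 3) = (1/4) * g 0 3 + (1/4) * g 1 2 - (1/4) * g 2 1 - (1/4) * g 3 0"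
  by (simp add: sum_idx proj_plus_def id2_def hodge2_def eps_def kdelta_def)

lemma Lplus_10: "(\<Sum>a\<in>idx. \<Sum>b\<in>idx. proj_plus 1 0 a b * g a b) = - (1/4) * g 0 1 + (1/4) * g 1 0 - (1/4) * g 2 3 + (1/4) * g 3 2"
  by (simp add: sum_idx proj_plus_def id2_def hodge2_def eps_def kdelta_def)

lemma Rplus_10: "(\<Sum>a\<in>idx. \<Sum>b\<in>idx. g a b * proj_plus a b 1 0) = - (1/4) * g 0 1 + (1/4) * g 1 0 - (1/4) * g 2 3 + (1/4) * g 3 2"
  by (simp add: sum_idx proj_plus_def id2_def hodge2_def eps_def kdelta_def)

lemma Lplus_11: "(\<Sum>a\<in>idx. \<Sum>b\<in>idx. proj_plus 1 1 a b * g a b) = 0"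
  by (simp add: sum_idx proj_plus_def id2_def hodge2_def eps_def kdelta_def)

lemma Rplus_11: "(\<Sum>a\<in>idx. \<Sum>b\<in>idx. g a b * proj_plus a b 1 1) = 0"
  by (simp add: sum_idx proj_plus_def id2_def hodge2_def eps_def kdelta_def)

lemma Lplus_12: "(\<Sum>a\<in>idx. \<Sum>b\<in>idx. proj_plus 1 2 a b * g a b) = (1/4) * g 0 3 + (1/4) * g 1 2 - (1/4) * g 2 1 - (1/4) * g 3 0"
  by (simp add: sum_idx proj_plus_def id2_def hodge2_def eps_def kdelta_def)

lemma Rplus_12: "(\<Sum>a\<in>idx. \<Sum>b\<in>idx. g a b * proj_plus a b 1 2) = (1/4) * g 0 3 + (1/4) * g 1 2 - (1/4) * g 2 1 - (1/4) * g 3 0"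
  by (simp add: sum_idx proj_plus_def id2_def hodge2_def eps_def kdelta_def)

lemma Lplus_13: "(\<Sum>a\<in>idx. \<Sum>b\<in>idx. proj_plus 1 3 a b * g a b) = - (1/4) * g 0 2 + (1/4) * g 1 3 + (1/4) * g 2 0 - (1/4) * g 3 1"
  by (simp add: sum_idx proj_plus_def id2_def hodge2_def eps_def kdelta_def)

lemma Rplus_13: "(\<Sum>a\<in>idx. \<Sum>b\<in>idx. g a b * proj_plus a b 1 3) = - (1/4) * g 0 2 + (1/4) * g 1 3 + (1/4) * g 2 0 - (1/4) * g 3 1"
  by (simp add: sum_idx proj_plus_def id2_def hodge2_def eps_def kdelta_def)

lemma Lplus_20: "(\<Sum>a\<in>idx. \<Sum>b\<in>idx. proj_plus 2 0 a b * g a b) = - (1/4) * g 0 2 + (1/4) * g 1 3 + (1/4) * g 2 0 - (1/4) * g 3 1"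
  by (simp add: sum_idx proj_plus_def id2_def hodge2_def eps_def kdelta_def)

lemma Rplus_20: "(\<Sum>a\<in>idx. \<Sum>b\<in>idx. g a b * proj_plus a b 2 0) = - (1/4) * g 0 2 + (1/4) * g 1 3 + (1/4) * g 2 0 - (1/4) * g 3 1"
  by (simp add: sum_idx proj_plus_def id2_def hodge2_def eps_def kdelta_def)

lemma Lplus_21: "(\<Sum>a\<in>idx. \<Sum>b\<in>idx. proj_plus 2 1 a b * g a b) = - (1/4) * g 0 3 - (1/4) * g 1 2 + (1/4) * g 2 1 + (1/4) * g 3 0"
  by (simp add: sum_idx proj_plus_def id2_def hodge2_def eps_def kdelta_def)

lemma Rplus_21: "(\<Sum>a\<in>idx. \<Sum>b\<in>idx. g a b * proj_plus a b 2 1) = - (1/4) * g 0 3 - (1/4) * g 1 2 + (1/4) * g 2 1 + (1/4) * g 3 0"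
  by (simp add: sum_idx proj_plus_def id2_def hodge2_def eps_def kdelta_def)

lemma Lplus_22: "(\<Sum>a\<in>idx. \<Sum>b\<in>idx. proj_plus 2 2 a b * g a b) = 0"
  by (simp add: sum_idx proj_plus_def id2_def hodge2_def eps_def kdelta_def)

lemma Rplus_22: "(\<Sum>a\<in>idx. \<Sum>b\<in>idx. g a b * proj_plus a b 2 2) = 0"
  by (simp add: sum_idx proj_plus_def id2_def hodge2_def eps_def kdelta_def)

lemma Lplus_23: "(\<Sum>a\<in>idx. \<Sum>b\<in>idx. proj_plus 2 3 a b * g a b) = (1/4) * g 0 1 - (1/4) * g 1 0 + (1/4) * g 2 3 - (1/4) * g 3 2"
  by (simp add: sum_idx proj_plus_def id2_def hodge2_def eps_def kdelta_def)

lemma Rplus_23: "(\<Sum>a\<in>idx. \<Sum>b\<in>idx. g a b * proj_plus a b 2 3) = (1/4) * g 0 1 - (1/4) * g 1 0 + (1/4) * g 2 3 - (1/4) * g 3 2"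
  by (simp add: sum_idx proj_plus_def id2_def hodge2_def eps_def kdelta_def)

lemma Lplus_30: "(\<Sum>a\<in>idx. \<Sum>b\<in>idx. proj_plus 3 0 a b * g a b) = - (1/4) * g 0 3 - (1/4) * g 1 2 + (1/4) * g 2 1 + (1/4) * g 3 0"
  by (simp add: sum_idx proj_plus_def id2_def hodge2_def eps_def kdelta_def)

lemma Rplus_30: "(\<Sum>a\<in>idx. \<Sum>b\<in>idx. g a b * proj_plus a b 3 0) = - (1/4) * g 0 3 - (1/4) * g 1 2 + (1/4) * g 2 1 + (1/4) * g 3 0"
  by (simp add: sum_idx proj_plus_def id2_def hodge2_def eps_def kdelta_def)

lemma Lplus_31: "(\<Sum>a\<in>idx. \<Sum>b\<in>idx. proj_plus 3 1 a b * g a b) = (1/4) * g 0 2 - (1/4) * g 1 3 - (1/4) * g 2 0 + (1/4) * g 3 1"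
  by (simp add: sum_idx proj_plus_def id2_def hodge2_def eps_def kdelta_def)

lemma Rplus_31: "(\<Sum>a\<in>idx. \<Sum>b\<in>idx. g a b * proj_plus a b 3 1) = (1/4) * g 0 2 - (1/4) * g 1 3 - (1/4) * g 2 0 + (1/4) * g 3 1"
  by (simp add: sum_idx proj_plus_def id2_def hodge2_def eps_def kdelta_def)

lemma Lplus_32: "(\<Sum>a\<in>idx. \<Sum>b\<in>idx. proj_plus 3 2 a b * g a b) = - (1/4) * g 0 1 + (1/4) * g 1 0 - (1/4) * g 2 3 + (1/4) * g 3 2"
  by (simp add: sum_idx proj_plus_def id2_def hodge2_def eps_def kdelta_def)

lemma Rplus_32: "(\<Sum>a\<in>idx. \<Sum>b\<in>idx. g a b * proj_plus a b 3 2) = - (1/4) * g 0 1 + (1/4) * g 1 0 - (1/4) * g 2 3 + (1/4) * g 3 2"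
  by (simp add: sum_idx proj_plus_def id2_def hodge2_def eps_def kdelta_def)

lemma Lplus_33: "(\<Sum>a\<in>idx. \<Sum>b\<in>idx. proj_plus 3 3 a b * g a b) = 0"
  by (simp add: sum_idx proj_plus_def id2_def hodge2_def eps_def kdelta_def)

lemma Rplus_33: "(\<Sum>a\<in>idx. \<Sum>b\<in>idx. g a b * proj_plus a b 3 3) = 0"
  by (simp add: sum_idx proj_plus_def id2_def hodge2_def eps_def kdelta_def)

lemmas tabs_plus = Lplus_00[unfolded One_nat_def] Rplus_00[unfolded One_nat_def] Lplus_01[unfolded One_nat_def] Rplus_01[unfolded One_nat_def] Lplus_02[unfolded One_nat_def] Rplus_02[unfolded One_nat_def] Lplus_03[unfolded One_nat_def] Rplus_03[unfolded One_nat_def] Lplus_10[unfolded One_nat_def] Rplus_10[unfolded One_nat_def] Lplus_11[unfolded One_nat_def] Rplus_11[unfolded One_nat_def] Lplus_12[unfolded One_nat_def] Rplus_12[unfolded One_nat_def] Lplus_13[unfolded One_nat_def] Rplus_13[unfolded One_nat_def] Lplus_20[unfolded One_nat_def] Rplus_20[unfolded One_nat_def] Lplus_21[unfolded One_nat_def] Rplus_21[unfolded One_nat_def] Lplus_22[unfolded One_nat_def] Rplus_22[unfolded One_nat_def] Lplus_23[unfolded One_nat_def] Rplus_23[unfolded One_nat_def] Lplus_30[unfolded One_nat_def] Rplus_30[unfolded One_nat_def] Lplus_31[unfolded One_nat_def] Rplus_31[unfolded One_nat_def] Lplus_32[unfolded One_nat_def] Rplus_32[unfolded One_nat_def] Lplus_33[unfolded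 One_nat_def] Rplus_33[unfolded One_nat_def]

lemma Lminus_00: "(\<Sum>a\<in>idx. \<Sum>b\<in>idx. proj_minus 0 0 a b * g a b) = 0"
  by (simp add: sum_idx proj_minus_def id2_def hodge2_def eps_def kdelta_def)

lemma Rminus_00: "(\<Sum>a\<in>idx. \<Sum>b\<in>idx. g a b * proj_minus a b 0 0) = 0"
  by (simp add: sum_idx proj_minus_def id2_def hodge2_def eps_def kdelta_def)

lemma Lminus_01: "(\<Sum>a\<in>idx. \<Sum>b\<in>idx. proj_minus 0 1 a b * g a b) = (1/4) * g 0 1 - (1/4) * g 1 0 - (1/4) * g 2 3 + (1/4) * g 3 2"
  by (simp add: sum_idx proj_minus_def id2_def hodge2_def eps_def kdelta_def)

lemma Rminus_01: "(\<Sum>a\<in>idx. \<Sum>b\<in>idx. g a b * proj_minus a b 0 1) = (1/4) * g 0 1 - (1/4) * g 1 0 - (1/4) * g 2 3 + (1/4) * g 3 2"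
  by (simp add: sum_idx proj_minus_def id2_def hodge2_def eps_def kdelta_def)

lemma Lminus_02: "(\<Sum>a\<in>idx. \<Sum>b\<in>idx. proj_minus 0 2 a b * g a b) = (1/4) * g 0 2 + (1/4) * g 1 3 - (1/4) * g 2 0 - (1/4) * g 3 1"
  by (simp add: sum_idx proj_minus_def id2_def hodge2_def eps_def kdelta_def)

lemma Rminus_02: "(\<Sum>a\<in>idx. \<Sum>b\<in>idx. g a b * proj_minus a b 0 2) = (1/4) * g 0 2 + (1/4) * g 1 3 - (1/4) * g 2 0 - (1/4) * g 3 1"
  by (simp add: sum_idx proj_minus_def id2_def hodge2_def eps_def kdelta_def)

lemma Lminus_03: "(\<Sum>a\<in>idx. \<Sum>b\<in>idx. proj_minus 0 3 a b * g a b) = (1/4) * g 0 3 - (1/4) * g 1 2 + (1/4) * g 2 1 - (1/4) * g 3 0"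
  by (simp add: sum_idx proj_minus_def id2_def hodge2_def eps_def kdelta_def)

lemma Rminus_03: "(\<Sum>a\<in>idx. \<Sum>b\<in>idx. g a b * proj_minus a b 0 3) = (1/4) * g 0 3 - (1/4) * g 1 2 + (1/4) * g 2 1 - (1/4) * g 3 0"
  by (simp add: sum_idx proj_minus_def id2_def hodge2_def eps_def kdelta_def)

lemma Lminus_10: "(\<Sum>a\<in>idx. \<Sum>b\<in>idx. proj_minus 1 0 a b * g a b) = - (1/4) * g 0 1 + (1/4) * g 1 0 + (1/4) * g 2 3 - (1/4) * g 3 2"
  by (simp add: sum_idx proj_minus_def id2_def hodge2_def eps_def kdelta_def)

lemma Rminus_10: "(\<Sum>a\<in>idx. \<Sum>b\<in>idx. g a b * proj_minus a b 1 0) = - (1/4) * g 0 1 + (1/4) * g 1 0 + (1/4) * g 2 3 - (1/4) * g 3 2"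
  by (simp add: sum_idx proj_minus_def id2_def hodge2_def eps_def kdelta_def)

lemma Lminus_11: "(\<Sum>a\<in>idx. \<Sum>b\<in>idx. proj_minus 1 1 a b * g a b) = 0"
  by (simp add: sum_idx proj_minus_def id2_def hodge2_def eps_def kdelta_def)

lemma Rminus_11: "(\<Sum>a\<in>idx. \<Sum>b\<in>idx. g a b * proj_minus a b 1 1) = 0"
  by (simp add: sum_idx proj_minus_def id2_def hodge2_def eps_def kdelta_def)

lemma Lminus_12: "(\<Sum>a\<in>idx. \<Sum>b\<in>idx. proj_minus 1 2 a b * g a b) = - (1/4) * g 0 3 + (1/4) * g 1 2 - (1/4) * g 2 1 + (1/4) * g 3 0"
  by (simp add: sum_idx proj_minus_def id2_def hodge2_def eps_def kdelta_def)

lemma Rminus_12: "(\<Sum>a\<in>idx. \<Sum>b\<in>idx. g a b * proj_minus a b 1 2) = - (1/4) * g 0 3 + (1/4) * g 1 2 - (1/4) * g 2 1 + (1/4) * g 3 0"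
  by (simp add: sum_idx proj_minus_def id2_def hodge2_def eps_def kdelta_def)

lemma Lminus_13: "(\<Sum>a\<in>idx. \<Sum>b\<in>idx. proj_minus 1 3 a b * g a b) = (1/4) * g 0 2 + (1/4) * g 1 3 - (1/4) * g 2 0 - (1/4) * g 3 1"
  by (simp add: sum_idx proj_minus_def id2_def hodge2_def eps_def kdelta_def)

lemma Rminus_13: "(\<Sum>a\<in>idx. \<Sum>b\<in>idx. g a b * proj_minus a b 1 3) = (1/4) * g 0 2 + (1/4) * g 1 3 - (1/4) * g 2 0 - (1/4) * g 3 1"
  by (simp add: sum_idx proj_minus_def id2_def hodge2_def eps_def kdelta_def)

lemma Lminus_20: "(\<Sum>a\<in>idx. \<Sum>b\<in>idx. proj_minus 2 0 a b * g a b) = - (1/4) * g 0 2 - (1/4) * g 1 3 + (1/4) * g 2 0 + (1/4) * g 3 1"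
  by (simp add: sum_idx proj_minus_def id2_def hodge2_def eps_def kdelta_def)

lemma Rminus_20: "(\<Sum>a\<in>idx. \<Sum>b\<in>idx. g a b * proj_minus a b 2 0) = - (1/4) * g 0 2 - (1/4) * g 1 3 + (1/4) * g 2 0 + (1/4) * g 3 1"
  by (simp add: sum_idx proj_minus_def id2_def hodge2_def eps_def kdelta_def)

lemma Lminus_21: "(\<Sum>a\<in>idx. \<Sum>b\<in>idx. proj_minus 2 1 a b * g a b) = (1/4) * g 0 3 - (1/4) * g 1 2 + (1/4) * g 2 1 - (1/4) * g 3 0"
  by (simp add: sum_idx proj_minus_def id2_def hodge2_def eps_def kdelta_def)

lemma Rminus_21: "(\<Sum>a\<in>idx. \<Sum>b\<in>idx. g a b * proj_minus a b 2 1) = (1/4) * g 0 3 - (1/4) * g 1 2 + (1/4) * g 2 1 - (1/4) * g 3 0"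
  by (simp add: sum_idx proj_minus_def id2_def hodge2_def eps_def kdelta_def)

lemma Lminus_22: "(\<Sum>a\<in>idx. \<Sum>b\<in>idx. proj_minus 2 2 a b * g a b) = 0"
  by (simp add: sum_idx proj_minus_def id2_def hodge2_def eps_def kdelta_def)

lemma Rminus_22: "(\<Sum>a\<in>idx. \<Sum>b\<in>idx. g a b * proj_minus a b 2 2) = 0"
  by (simp add: sum_idx proj_minus_def id2_def hodge2_def eps_def kdelta_def)

lemma Lminus_23: "(\<Sum>a\<in>idx. \<Sum>b\<in>idx. proj_minus 2 3 a b * g a b) = - (1/4) * g 0 1 + (1/4) * g 1 0 + (1/4) * g 2 3 - (1/4) * g 3 2"
  by (simp add: sum_idx proj_minus_def id2_def hodge2_def eps_def kdelta_def)

lemma Rminus_23: "(\<Sum>a\<in>idx. \<Sum>b\<in>idx. g a b * proj_minus a b 2 3) = - (1/4) * g 0 1 + (1/4) * g 1 0 + (1/4) * g 2 3 - (1/4) * g 3 2"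
  by (simp add: sum_idx proj_minus_def id2_def hodge2_def eps_def kdelta_def)

lemma Lminus_30: "(\<Sum>a\<in>idx. \<Sum>b\<in>idx. proj_minus 3 0 a b * g a b) = - (1/4) * g 0 3 + (1/4) * g 1 2 - (1/4) * g 2 1 + (1/4) * g 3 0"
  by (simp add: sum_idx proj_minus_def id2_def hodge2_def eps_def kdelta_def)

lemma Rminus_30: "(\<Sum>a\<in>idx. \<Sum>b\<in>idx. g a b * proj_minus a b 3 0) = - (1/4) * g 0 3 + (1/4) * g 1 2 - (1/4) * g 2 1 + (1/4) * g 3 0"
  by (simp add: sum_idx proj_minus_def id2_def hodge2_def eps_def kdelta_def)

lemma Lminus_31: "(\<Sum>a\<in>idx. \<Sum>b\<in>idx. proj_minus 3 1 a b * g a b) = - (1/4) * g 0 2 - (1/4) * g 1 3 + (1/4) * g 2 0 + (1/4) * g 3 1"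
  by (simp add: sum_idx proj_minus_def id2_def hodge2_def eps_def kdelta_def)

lemma Rminus_31: "(\<Sum>a\<in>idx. \<Sum>b\<in>idx. g a b * proj_minus a b 3 1) = - (1/4) * g 0 2 - (1/4) * g 1 3 + (1/4) * g 2 0 + (1/4) * g 3 1"
  by (simp add: sum_idx proj_minus_def id2_def hodge2_def eps_def kdelta_def)

lemma Lminus_32: "(\<Sum>a\<in>idx. \<Sum>b\<in>idx. proj_minus 3 2 a b * g a b) = (1/4) * g 0 1 - (1/4) * g 1 0 - (1/4) * g 2 3 + (1/4) * g 3 2"
  by (simp add: sum_idx proj_minus_def id2_def hodge2_def eps_def kdelta_def)

lemma Rminus_32: "(\<Sum>a\<in>idx. \<Sum>b\<in>idx. g a b * proj_minus a b 3 2) = (1/4) * g 0 1 - (1/4) * g 1 0 - (1/4) * g 2 3 + (1/4) * g 3 2"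
  by (simp add: sum_idx proj_minus_def id2_def hodge2_def eps_def kdelta_def)

lemma Lminus_33: "(\<Sum>a\<in>idx. \<Sum>b\<in>idx. proj_minus 3 3 a b * g a b) = 0"
  by (simp add: sum_idx proj_minus_def id2_def hodge2_def eps_def kdelta_def)

lemma Rminus_33: "(\<Sum>a\<in>idx. \<Sum>b\<in>idx. g a b * proj_minus a b 3 3) = 0"
  by (simp add: sum_idx proj_minus_def id2_def hodge2_def eps_def kdelta_def)

lemmas tabs_minus = Lminus_00[unfolded One_nat_def] Rminus_00[unfolded One_nat_def] Lminus_01[unfolded One_nat_def] Rminus_01[unfolded One_nat_def] Lminus_02[unfolded One_nat_def] Rminus_02[unfolded One_nat_def] Lminus_03[unfolded One_nat_def] Rminus_03[unfolded One_nat_def] Lminus_10[unfolded One_nat_def] Rminus_10[unfolded One_nat_def] Lminus_11[unfolded One_nat_def] Rminus_11[unfolded One_nat_def] Lminus_12[unfolded One_nat_def] Rminus_12[unfolded One_nat_def] Lminus_13[unfolded One_nat_def] Rminus_13[unfolded One_nat_def] Lminus_20[unfolded One_nat_def] Rminus_20[unfolded One_nat_def] Lminus_21[unfolded One_nat_def] Rminus_21[unfolded One_nat_def] Lminus_22[unfolded One_nat_def] Rminus_22[unfolded One_nat_def] Lminus_23[unfolded One_nat_def] Rminus_23[unfolded One_nat_def] Lminus_30[unfolded One_nat_def] Rminus_30[unfolded One_nat_def] Lminus_31[unfolded One_nat_def] Rminus_31[unfolded One_nat_def] Lminus_32[unfolded One_nat_def] Rminus_32[unfolded One_nat_def] Lminus_33[unfolded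 One_nat_def] Rminus_33[unfolded One_nat_def]
lemma norm_as:
  fixes T :: tensor4
  assumes as1: "\<And>i j k l. i\<in>idx \<Longrightarrow> j\<in>idx \<Longrightarrow> k\<in>idx \<Longrightarrow> l\<in>idx \<Longrightarrow> T j i k l = - T i j k l"
    and as2: "\<And>i j k l. i\<in>idx \<Longrightarrow> j\<in>idx \<Longrightarrow> k\<in>idx \<Longrightarrow> l\<in>idx \<Longrightarrow> T i j l k = - T i j k l"
  shows "(1/4) * (\<Sum>i\<in>idx. \<Sum>j\<in>idx. \<Sum>k\<in>idx. \<Sum>l\<in>idx. (T i j k l)^2) = (T 0 1 0 1)^2 + (T 0 1 0 2)^2 + (T 0 1 0 3)^2 + (T 0 1 1 2)^2 + (T 0 1 1 3)^2 + (T 0 1 2 3)^2 + (T 0 2 0 1)^2 + (T 0 2 0 2)^2 + (T 0 2 0 3)^2 + (T 0 2 1 2)^2 + (T 0 2 1 3)^2 + (T 0 2 2 3)^2 + (T 0 3 0 1)^2 + (T 0 3 0 2)^2 + (T 0 3 0 3)^2 + (T 0 3 1 2)^2 + (T 0 3 1 3)^2 + (T 0 3 2 3)^2 + (T 1 2 0 1)^2 + (T 1 2 0 2)^2 + (T 1 2 0 3)^2 + (T 1 2 1 2)^2 + (T 1 2 1 3)^2 + (T 1 2 2 3)^2 + (T 1 3 0 1)^2 + (T 1 3 0 2)^2 + (T 1 3 0 3)^2 + (T 1 3 1 2)^2 + (T 1 3 1 3)^2 + (T 1 3 2 3)^2 + (T 2 3 0 1)^2 + (T 2 3 0 2)^2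 + (T 2 3 0 3)^2 + (T 2 3 1 2)^2 + (T 2 3 1 3)^2 + (T 2 3 2 3)^2"
proof -
  have z1: "T i i k l = 0" if "i\<in>idx" "k\<in>idx" "l\<in>idx" for i k l using as1[OF that(1) that(1) that(2) that(3)] by linarith
  have z2: "T i j k k = 0" if "i\<in>idx" "j\<in>idx" "k\<in>idx" for i j k using as2[OF that(1) that(2) that(3) that(3)] by linarith
  have s1: "\<And>i j k l. i < j \<Longrightarrow> i\<in>idx \<Longrightarrow> j\<in>idx \<Longrightarrow> k\<in>idx \<Longrightarrow> l\<in>idx \<Longrightarrow> T j i k l = - T i j k l" using as1 by blast
  have s2: "\<And>i j k l. k < l \<Longrightarrow> i\<in>idx \<Longrightarrow> j\<in>idx \<Longrightarrow> k\<in>idx \<Longrightarrow> l\<in>idx \<Longrightarrow> T i j l k = - T i j k l" using as2 by blast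
  show ?thesis by (simp add: sum_idx z1 z2 s1 s2 idx4)
qed

lemma sgn_sw: "sgn (int a - int b) = - sgn (int b - int a)"
  by (simp add: sgn_if)

lemma eps_as1: "eps j i a b = - eps i j a b"
  using sgn_sw[of i j] sgn_sw[of a i] sgn_sw[of a j] sgn_sw[of b i] sgn_sw[of b j]
  by (auto simp: eps_def mult_ac)

lemma eps_as2: "eps i j b a = - eps i j a b"
  using sgn_sw[of a b]
  by (auto simp: eps_def mult_ac)

lemma pp_as1: "proj_plus j i a b = - proj_plus i j a b"
  unfolding proj_plus_def id2_def hodge2_def eps_as1[of j i] by (simp add: field_simps)
lemma pp_as2: "proj_plus i j b a = - proj_plus i j a b"
  unfolding proj_plus_def id2_def hodge2_def eps_as2[of i j b] by (simp add: field_simps)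
lemma pm_as1: "proj_minus j i a b = - proj_minus i j a b"
  unfolding proj_minus_def id2_def hodge2_def eps_as1[of j i] by (simp add: field_simps)
lemma pm_as2: "proj_minus i j b a = - proj_minus i j a b"
  unfolding proj_minus_def id2_def hodge2_def eps_as2[of i j b] by (simp add: field_simps)

lemma sand_as1: assumes "\<And>a b. P j i a b = - P i j a b"
  shows "sandwich P T j i k l = - sandwich P T i j k l"
  by (simp add: sandwich_def assms sum_negf)
lemma sand_as2: assumes "\<And>c d. P c d l k = - P c d k l"
  shows "sandwich P T i j l k = - sandwich P T i j k l"
  by (simp add: sandwich_def assms sum_negf)

definition pI :: "nat \<Rightarrow> nat" where "pI p = [0,0,0,1,1,2] ! p"
definition pJ :: "nat \<Rightarrow> nat" where "pJ p = [1,2,3,2,3,3] ! p"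
definition sg :: "nat \<Rightarrow> real" where "sg p = [1,-1,1] ! p"
definition Mx :: "tensor4 \<Rightarrow> nat \<Rightarrow> nat \<Rightarrow> real" where
  "Mx R p q = R (pI p) (pJ p) (pI q) (pJ q)"
definition cE :: "tensor4 \<Rightarrow> real" where "cE R = R 0 1 0 1 + R 0 2 0 2 + R 0 3 0 3"
definition hat :: "tensor4 \<Rightarrow> real \<Rightarrow> nat \<Rightarrow> nat \<Rightarrow> real" where
  "hat R t p q = (Mx R p q + t * sg q * Mx R p (5-q) + t * sg p * Mx R (5-p) q
      + sg p * sg q * Mx R (5-p) (5-q)) / 4"
definition WA :: "tensor4 \<Rightarrow> real \<Rightarrow> nat \<Rightarrow> nat \<Rightarrow> real" where
  "WA R t p q = 2 * hat R t p q - cE R / 3 * (if p = q then 1 else 0)"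
definition qf :: "(nat \<Rightarrow> nat \<Rightarrow> real) \<Rightarrow> (nat \<Rightarrow> real) \<Rightarrow> real" where
  "qf a u = (\<Sum>p<3. \<Sum>q<3. a p q * u p * u q)"
definition sA :: "(nat \<Rightarrow> nat \<Rightarrow> real) \<Rightarrow> real" where
  "sA a = (\<Sum>p<3. \<Sum>q<3. (a p q)^2)"
definition ns :: "(nat \<Rightarrow> real) \<Rightarrow> real" where
  "ns u = (u 0)^2 + (u 1)^2 + (u 2)^2"

lemma sum3: "(\<Sum>p<(3::nat). f p) = f 0 + f 1 + (f 2 :: real)"
  by (simp add: numeral_3_eq_3 numeral_2_eq_2 add.assoc)

context
  fixes R :: tensor4
  assumes AC: "alg_curv R"
begin

lemma Rz1: "i\<in>idx \<Longrightarrow> k\<in>idx \<Longrightarrow> l\<in>idx \<Longrightarrow> R i i k l = 0"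
  using AC unfolding alg_curv_def by fastforce
lemma Rz2: "i\<in>idx \<Longrightarrow> j\<in>idx \<Longrightarrow> k\<in>idx \<Longrightarrow> R i j k k = 0"
  using AC unfolding alg_curv_def by fastforce
lemma Rs1: "i < j \<Longrightarrow> i\<in>idx \<Longrightarrow> j\<in>idx \<Longrightarrow> k\<in>idx \<Longrightarrow> l\<in>idx \<Longrightarrow> R j i k l = - R i j k l"
  using AC unfolding alg_curv_def by blast
lemma Rs2: "k < l \<Longrightarrow> i\<in>idx \<Longrightarrow> j\<in>idx \<Longrightarrow> k\<in>idx \<Longrightarrow> l\<in>idx \<Longrightarrow> R i j l k = - R i j k l"
  using AC unfolding alg_curv_def by blast
lemma Rs3: "k < i \<or> (k = i \<and> l < j) \<Longrightarrow> i\<in>idx \<Longrightarrow> j\<in>idx \<Longrightarrow> k\<in>idx \<Longrightarrow> l\<in>idx \<Longrightarrow> R i j k l = R k l i j"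
  using AC unfolding alg_curv_def by blast
lemmas Rn = Rz1 Rz2 Rs1 Rs2 Rs3

lemma bianchi: "R 0 1 2 3 - R 0 2 1 3 + R 0 3 1 2 = 0"
proof -
  have "R 0 1 2 3 + R 1 2 0 3 + R 2 0 1 3 = 0" using AC[unfolded alg_curv_def, rule_format, of 0 1 2 3] by (simp add: idx4)
  thus ?thesis by (simp add: Rn idx4)
qed
end
context
  fixes R :: tensor4
  assumes AC: "alg_curv R" and EIN: "einstein_at R"
begin

lemma ric: "i\<in>idx \<Longrightarrow> k\<in>idx \<Longrightarrow> ricci R i k = cE R * kdelta i k"
proof -
  obtain c where c: "\<forall>i\<in>idx. \<forall>k\<in>idx. ricci R i k = c * kdelta i k" using EIN einstein_at_def by blast
  have "ricci R 0 0 = cE R" by (simp add: ricci_def sum_idx Rn[OF AC] idx4 cE_def)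
  moreover have "ricci R 0 0 = c" using c by (simp add: idx4 kdelta_def)
  ultimately have "c = cE R" by simp
  thus "i\<in>idx \<Longrightarrow> k\<in>idx \<Longrightarrow> ricci R i k = cE R * kdelta i k" using c by simp
qed

lemma scalE: "scal R = 4 * cE R"
  by (simp add: scal_def sum_idx ric idx4 kdelta_def)

lemma ricx: "ricci R i k = (\<Sum>j\<in>idx. R i j k j)" by (simp add: ricci_def)

lemma subs:
  "R 0 3 1 3 = - R 0 2 1 2" "R 0 3 2 3 = R 0 1 1 2" "R 0 2 2 3 = - R 0 1 1 3"
  "R 1 3 2 3 = - R 0 1 0 2" "R 1 2 2 3 = R 0 1 0 3" "R 1 2 1 3 = - R 0 2 0 3"
  "R 1 2 1 2 = R 0 3 0 3" "R 1 3 1 3 = R 0 2 0 2" "R 2 3 2 3 = R 0 1 0 1"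
  "R 0 2 1 3 = R 0 1 2 3 + R 0 3 1 2"
proof -
  have e: "\<And>i k. i\<in>idx \<Longrightarrow> k\<in>idx \<Longrightarrow> (\<Sum>j\<in>idx. R i j k j) = cE R * kdelta i k"
    using ric ricx by simp
  note E = e[of 0 1] e[of 0 2] e[of 0 3] e[of 1 2] e[of 1 3] e[of 2 3] e[of 1 1] e[of 2 2] e[of 3 3]
  have E2: "R 0 2 1 2 + R 0 3 1 3 = 0" "- R 0 1 1 2 + R 0 3 2 3 = 0" "- R 0 1 1 3 - R 0 2 2 3 = 0"
     "R 0 1 0 2 + R 1 3 2 3 = 0" "R 0 1 0 3 - R 1 2 2 3 = 0" "R 0 2 0 3 + R 1 2 1 3 = 0"
     "R 0 1 0 1 + R 1 2 1 2 + R 1 3 1 3 = cE R" "R 0 2 0 2 + R 1 2 1 2 + R 2 3 2 3 = cE R"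
     "R 0 3 0 3 + R 1 3 1 3 + R 2 3 2 3 = cE R"
    using E by (simp_all add: sum_idx Rn[OF AC] idx4 kdelta_def)
  show "R 0 3 1 3 = - R 0 2 1 2" "R 0 3 2 3 = R 0 1 1 2" "R 0 2 2 3 = - R 0 1 1 3"
  "R 1 3 2 3 = - R 0 1 0 2" "R 1 2 2 3 = R 0 1 0 3" "R 1 2 1 3 = - R 0 2 0 3"
    using E2 by linarith+
  show "R 1 2 1 2 = R 0 3 0 3" "R 1 3 1 3 = R 0 2 0 2" "R 2 3 2 3 = R 0 1 0 1"
    using E2 unfolding cE_def by linarith+
  show "R 0 2 1 3 = R 0 1 2 3 + R 0 3 1 2" using bianchi[OF AC] by linarith
qed

lemma wp_as1: "weyl_plus R j i k l = - weyl_plus R i j k l"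
  unfolding weyl_plus_def by (rule sand_as1) (rule pp_as1)
lemma wp_as2: "weyl_plus R i j l k = - weyl_plus R i j k l"
  unfolding weyl_plus_def by (rule sand_as2) (rule pp_as2)

lemma ent_plus_0_0: "weyl_plus R 0 1 0 1 = (WA R (1) 0 0 / 2)"
  by ((simp only: weyl_plus_def sandwich_nest)?, (simp add: tabs_plus)?,
   (simp add: weyl_def ric scalE kdelta_def Rn[OF AC] idx4 WA_def hat_def Mx_def pI_def pJ_def sg_def cE_def)?, (simp add: field_simps)?)

lemma ent_plus_0_1: "weyl_plus R 0 1 0 2 = (WA R (1) 0 1 / 2)"
  by ((simp only: weyl_plus_def sandwich_nest)?, (simp add: tabs_plus)?,
   (simp add: weyl_def ric scalE kdelta_def Rn[OF AC] idx4 WA_def hat_def Mx_def pI_def pJ_def sg_def cE_def)?, (simp add: field_simps)?)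

lemma ent_plus_0_2: "weyl_plus R 0 1 0 3 = (WA R (1) 0 2 / 2)"
  by ((simp only: weyl_plus_def sandwich_nest)?, (simp add: tabs_plus)?,
   (simp add: weyl_def ric scalE kdelta_def Rn[OF AC] idx4 WA_def hat_def Mx_def pI_def pJ_def sg_def cE_def)?, (simp add: field_simps)?)

lemma ent_plus_0_3: "weyl_plus R 0 1 1 2 = (WA R (1) 0 2 / 2)"
  by ((simp only: weyl_plus_def sandwich_nest)?, (simp add: tabs_plus)?,
   (simp add: weyl_def ric scalE kdelta_def Rn[OF AC] idx4 WA_def hat_def Mx_def pI_def pJ_def sg_def cE_def)?, (simp add: field_simps)?)

lemma ent_plus_0_4: "weyl_plus R 0 1 1 3 = - (WA R (1) 0 1 / 2)"
  by ((simp only: weyl_plus_def sandwich_nest)?, (simp add: tabs_plus)?,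
   (simp add: weyl_def ric scalE kdelta_def Rn[OF AC] idx4 WA_def hat_def Mx_def pI_def pJ_def sg_def cE_def)?, (simp add: field_simps)?)

lemma ent_plus_0_5: "weyl_plus R 0 1 2 3 = (WA R (1) 0 0 / 2)"
  by ((simp only: weyl_plus_def sandwich_nest)?, (simp add: tabs_plus)?,
   (simp add: weyl_def ric scalE kdelta_def Rn[OF AC] idx4 WA_def hat_def Mx_def pI_def pJ_def sg_def cE_def)?, (simp add: field_simps)?)

lemma ent_plus_1_0: "weyl_plus R 0 2 0 1 = (WA R (1) 1 0 / 2)"
  by ((simp only: weyl_plus_def sandwich_nest)?, (simp add: tabs_plus)?,
   (simp add: weyl_def ric scalE kdelta_def Rn[OF AC] idx4 WA_def hat_def Mx_def pI_def pJ_def sg_def cE_def)?, (simp add: field_simps)?)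

lemma ent_plus_1_1: "weyl_plus R 0 2 0 2 = (WA R (1) 1 1 / 2)"
  by ((simp only: weyl_plus_def sandwich_nest)?, (simp add: tabs_plus)?,
   (simp add: weyl_def ric scalE kdelta_def Rn[OF AC] idx4 WA_def hat_def Mx_def pI_def pJ_def sg_def cE_def)?, (simp add: field_simps)?)

lemma ent_plus_1_2: "weyl_plus R 0 2 0 3 = (WA R (1) 1 2 / 2)"
  by ((simp only: weyl_plus_def sandwich_nest)?, (simp add: tabs_plus)?,
   (simp add: weyl_def ric scalE kdelta_def Rn[OF AC] idx4 WA_def hat_def Mx_def pI_def pJ_def sg_def cE_def)?, (simp add: field_simps)?)

lemma ent_plus_1_3: "weyl_plus R 0 2 1 2 = (WA R (1) 1 2 / 2)"
  by ((simp only: weyl_plus_def sandwich_nest)?, (simp add: tabs_plus)?,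
   (simp add: weyl_def ric scalE kdelta_def Rn[OF AC] idx4 WA_def hat_def Mx_def pI_def pJ_def sg_def cE_def)?, (simp add: field_simps)?)

lemma ent_plus_1_4: "weyl_plus R 0 2 1 3 = - (WA R (1) 1 1 / 2)"
  by ((simp only: weyl_plus_def sandwich_nest)?, (simp add: tabs_plus)?,
   (simp add: weyl_def ric scalE kdelta_def Rn[OF AC] idx4 WA_def hat_def Mx_def pI_def pJ_def sg_def cE_def)?, (simp add: field_simps)?)

lemma ent_plus_1_5: "weyl_plus R 0 2 2 3 = (WA R (1) 1 0 / 2)"
  by ((simp only: weyl_plus_def sandwich_nest)?, (simp add: tabs_plus)?,
   (simp add: weyl_def ric scalE kdelta_def Rn[OF AC] idx4 WA_def hat_def Mx_def pI_def pJ_def sg_def cE_def)?, (simp add: field_simps)?)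

lemma ent_plus_2_0: "weyl_plus R 0 3 0 1 = (WA R (1) 2 0 / 2)"
  by ((simp only: weyl_plus_def sandwich_nest)?, (simp add: tabs_plus)?,
   (simp add: weyl_def ric scalE kdelta_def Rn[OF AC] idx4 WA_def hat_def Mx_def pI_def pJ_def sg_def cE_def)?, (simp add: field_simps)?)

lemma ent_plus_2_1: "weyl_plus R 0 3 0 2 = (WA R (1) 2 1 / 2)"
  by ((simp only: weyl_plus_def sandwich_nest)?, (simp add: tabs_plus)?,
   (simp add: weyl_def ric scalE kdelta_def Rn[OF AC] idx4 WA_def hat_def Mx_def pI_def pJ_def sg_def cE_def)?, (simp add: field_simps)?)

lemma ent_plus_2_2: "weyl_plus R 0 3 0 3 = (WA R (1) 2 2 / 2)"
  by ((simp only: weyl_plus_def sandwich_nest)?, (simp add: tabs_plus)?,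
   (simp add: weyl_def ric scalE kdelta_def Rn[OF AC] idx4 WA_def hat_def Mx_def pI_def pJ_def sg_def cE_def)?, (simp add: field_simps)?)

lemma ent_plus_2_3: "weyl_plus R 0 3 1 2 = (WA R (1) 2 2 / 2)"
  by ((simp only: weyl_plus_def sandwich_nest)?, (simp add: tabs_plus)?,
   (simp add: weyl_def ric scalE kdelta_def Rn[OF AC] idx4 WA_def hat_def Mx_def pI_def pJ_def sg_def cE_def)?, (simp add: field_simps)?)

lemma ent_plus_2_4: "weyl_plus R 0 3 1 3 = - (WA R (1) 2 1 / 2)"
  by ((simp only: weyl_plus_def sandwich_nest)?, (simp add: tabs_plus)?,
   (simp add: weyl_def ric scalE kdelta_def Rn[OF AC] idx4 WA_def hat_def Mx_def pI_def pJ_def sg_def cE_def)?, (simp add: field_simps)?)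

lemma ent_plus_2_5: "weyl_plus R 0 3 2 3 = (WA R (1) 2 0 / 2)"
  by ((simp only: weyl_plus_def sandwich_nest)?, (simp add: tabs_plus)?,
   (simp add: weyl_def ric scalE kdelta_def Rn[OF AC] idx4 WA_def hat_def Mx_def pI_def pJ_def sg_def cE_def)?, (simp add: field_simps)?)

lemma ent_plus_3_0: "weyl_plus R 1 2 0 1 = (WA R (1) 2 0 / 2)"
  by ((simp only: weyl_plus_def sandwich_nest)?, (simp add: tabs_plus)?,
   (simp add: weyl_def ric scalE kdelta_def Rn[OF AC] idx4 WA_def hat_def Mx_def pI_def pJ_def sg_def cE_def)?, (simp add: field_simps)?)

lemma ent_plus_3_1: "weyl_plus R 1 2 0 2 = (WA R (1) 2 1 / 2)"
  by ((simp only: weyl_plus_def sandwich_nest)?, (simp add: tabs_plus)?,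
   (simp add: weyl_def ric scalE kdelta_def Rn[OF AC] idx4 WA_def hat_def Mx_def pI_def pJ_def sg_def cE_def)?, (simp add: field_simps)?)

lemma ent_plus_3_2: "weyl_plus R 1 2 0 3 = (WA R (1) 2 2 / 2)"
  by ((simp only: weyl_plus_def sandwich_nest)?, (simp add: tabs_plus)?,
   (simp add: weyl_def ric scalE kdelta_def Rn[OF AC] idx4 WA_def hat_def Mx_def pI_def pJ_def sg_def cE_def)?, (simp add: field_simps)?)

lemma ent_plus_3_3: "weyl_plus R 1 2 1 2 = (WA R (1) 2 2 / 2)"
  by ((simp only: weyl_plus_def sandwich_nest)?, (simp add: tabs_plus)?,
   (simp add: weyl_def ric scalE kdelta_def Rn[OF AC] idx4 WA_def hat_def Mx_def pI_def pJ_def sg_def cE_def)?, (simp add: field_simps)?)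

lemma ent_plus_3_4: "weyl_plus R 1 2 1 3 = - (WA R (1) 2 1 / 2)"
  by ((simp only: weyl_plus_def sandwich_nest)?, (simp add: tabs_plus)?,
   (simp add: weyl_def ric scalE kdelta_def Rn[OF AC] idx4 WA_def hat_def Mx_def pI_def pJ_def sg_def cE_def)?, (simp add: field_simps)?)

lemma ent_plus_3_5: "weyl_plus R 1 2 2 3 = (WA R (1) 2 0 / 2)"
  by ((simp only: weyl_plus_def sandwich_nest)?, (simp add: tabs_plus)?,
   (simp add: weyl_def ric scalE kdelta_def Rn[OF AC] idx4 WA_def hat_def Mx_def pI_def pJ_def sg_def cE_def)?, (simp add: field_simps)?)

lemma ent_plus_4_0: "weyl_plus R 1 3 0 1 = - (WA R (1) 1 0 / 2)"
  by ((simp only: weyl_plus_def sandwich_nest)?, (simp add: tabs_plus)?,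
   (simp add: weyl_def ric scalE kdelta_def Rn[OF AC] idx4 WA_def hat_def Mx_def pI_def pJ_def sg_def cE_def)?, (simp add: field_simps)?)

lemma ent_plus_4_1: "weyl_plus R 1 3 0 2 = - (WA R (1) 1 1 / 2)"
  by ((simp only: weyl_plus_def sandwich_nest)?, (simp add: tabs_plus)?,
   (simp add: weyl_def ric scalE kdelta_def Rn[OF AC] idx4 WA_def hat_def Mx_def pI_def pJ_def sg_def cE_def)?, (simp add: field_simps)?)

lemma ent_plus_4_2: "weyl_plus R 1 3 0 3 = - (WA R (1) 1 2 / 2)"
  by ((simp only: weyl_plus_def sandwich_nest)?, (simp add: tabs_plus)?,
   (simp add: weyl_def ric scalE kdelta_def Rn[OF AC] idx4 WA_def hat_def Mx_def pI_def pJ_def sg_def cE_def)?, (simp add: field_simps)?)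

lemma ent_plus_4_3: "weyl_plus R 1 3 1 2 = - (WA R (1) 1 2 / 2)"
  by ((simp only: weyl_plus_def sandwich_nest)?, (simp add: tabs_plus)?,
   (simp add: weyl_def ric scalE kdelta_def Rn[OF AC] idx4 WA_def hat_def Mx_def pI_def pJ_def sg_def cE_def)?, (simp add: field_simps)?)

lemma ent_plus_4_4: "weyl_plus R 1 3 1 3 = (WA R (1) 1 1 / 2)"
  by ((simp only: weyl_plus_def sandwich_nest)?, (simp add: tabs_plus)?,
   (simp add: weyl_def ric scalE kdelta_def Rn[OF AC] idx4 WA_def hat_def Mx_def pI_def pJ_def sg_def cE_def)?, (simp add: field_simps)?)

lemma ent_plus_4_5: "weyl_plus R 1 3 2 3 = - (WA R (1) 1 0 / 2)"
  by ((simp only: weyl_plus_def sandwich_nest)?, (simp add: tabs_plus)?,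
   (simp add: weyl_def ric scalE kdelta_def Rn[OF AC] idx4 WA_def hat_def Mx_def pI_def pJ_def sg_def cE_def)?, (simp add: field_simps)?)

lemma ent_plus_5_0: "weyl_plus R 2 3 0 1 = (WA R (1) 0 0 / 2)"
  by ((simp only: weyl_plus_def sandwich_nest)?, (simp add: tabs_plus)?,
   (simp add: weyl_def ric scalE kdelta_def Rn[OF AC] idx4 WA_def hat_def Mx_def pI_def pJ_def sg_def cE_def)?, (simp add: field_simps)?)

lemma ent_plus_5_1: "weyl_plus R 2 3 0 2 = (WA R (1) 0 1 / 2)"
  by ((simp only: weyl_plus_def sandwich_nest)?, (simp add: tabs_plus)?,
   (simp add: weyl_def ric scalE kdelta_def Rn[OF AC] idx4 WA_def hat_def Mx_def pI_def pJ_def sg_def cE_def)?, (simp add: field_simps)?)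

lemma ent_plus_5_2: "weyl_plus R 2 3 0 3 = (WA R (1) 0 2 / 2)"
  by ((simp only: weyl_plus_def sandwich_nest)?, (simp add: tabs_plus)?,
   (simp add: weyl_def ric scalE kdelta_def Rn[OF AC] idx4 WA_def hat_def Mx_def pI_def pJ_def sg_def cE_def)?, (simp add: field_simps)?)

lemma ent_plus_5_3: "weyl_plus R 2 3 1 2 = (WA R (1) 0 2 / 2)"
  by ((simp only: weyl_plus_def sandwich_nest)?, (simp add: tabs_plus)?,
   (simp add: weyl_def ric scalE kdelta_def Rn[OF AC] idx4 WA_def hat_def Mx_def pI_def pJ_def sg_def cE_def)?, (simp add: field_simps)?)

lemma ent_plus_5_4: "weyl_plus R 2 3 1 3 = - (WA R (1) 0 1 / 2)"
  by ((simp only: weyl_plus_def sandwich_nest)?, (simp add: tabs_plus)?,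
   (simp add: weyl_def ric scalE kdelta_def Rn[OF AC] idx4 WA_def hat_def Mx_def pI_def pJ_def sg_def cE_def)?, (simp add: field_simps)?)

lemma ent_plus_5_5: "weyl_plus R 2 3 2 3 = (WA R (1) 0 0 / 2)"
  by ((simp only: weyl_plus_def sandwich_nest)?, (simp add: tabs_plus)?,
   (simp add: weyl_def ric scalE kdelta_def Rn[OF AC] idx4 WA_def hat_def Mx_def pI_def pJ_def sg_def cE_def)?, (simp add: field_simps)?)

lemmas ent_plus = ent_plus_0_0[unfolded One_nat_def] ent_plus_0_1[unfolded One_nat_def] ent_plus_0_2[unfolded One_nat_def] ent_plus_0_3[unfolded One_nat_def] ent_plus_0_4[unfolded One_nat_def] ent_plus_0_5[unfolded One_nat_def] ent_plus_1_0[unfolded One_nat_def] ent_plus_1_1[unfolded One_nat_def] ent_plus_1_2[unfolded One_nat_def] ent_plus_1_3[unfolded One_nat_def] ent_plus_1_4[unfolded One_nat_def] ent_plus_1_5[unfolded One_nat_def] ent_plus_2_0[unfolded One_nat_def] ent_plus_2_1[unfolded One_nat_def] ent_plus_2_2[unfolded One_nat_def] ent_plus_2_3[unfolded One_nat_def] ent_plus_2_4[unfolded One_nat_def] ent_plus_2_5[unfolded One_nat_def] ent_plus_3_0[unfolded One_nat_def] ent_plus_3_1[unfolded One_nat_def] ent_plus_3_2[unfolded One_nat_def] ent_plus_3_3[unfolded One_nat_def] ent_plus_3_4[unfolded One_nat_def] ent_plus_3_5[unfolded One_nat_def] ent_plus_4_0[unfolded One_nat_def] ent_plus_4_1[unfolded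 One_nat_def] ent_plus_4_2[unfolded One_nat_def] ent_plus_4_3[unfolded One_nat_def] ent_plus_4_4[unfolded One_nat_def] ent_plus_4_5[unfolded One_nat_def] ent_plus_5_0[unfolded One_nat_def] ent_plus_5_1[unfolded One_nat_def] ent_plus_5_2[unfolded One_nat_def] ent_plus_5_3[unfolded One_nat_def] ent_plus_5_4[unfolded One_nat_def] ent_plus_5_5[unfolded One_nat_def]

lemma ent_minus_0_0: "weyl_minus R 0 1 0 1 = (WA R (-1) 0 0 / 2)"
  by ((simp only: weyl_minus_def sandwich_nest)?, (simp add: tabs_minus)?,
   (simp add: weyl_def ric scalE kdelta_def Rn[OF AC] idx4 WA_def hat_def Mx_def pI_def pJ_def sg_def cE_def)?, (simp add: field_simps)?)

lemma ent_minus_0_1: "weyl_minus R 0 1 0 2 = (WA R (-1) 0 1 / 2)"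
  by ((simp only: weyl_minus_def sandwich_nest)?, (simp add: tabs_minus)?,
   (simp add: weyl_def ric scalE kdelta_def Rn[OF AC] idx4 WA_def hat_def Mx_def pI_def pJ_def sg_def cE_def)?, (simp add: field_simps)?)

lemma ent_minus_0_2: "weyl_minus R 0 1 0 3 = (WA R (-1) 0 2 / 2)"
  by ((simp only: weyl_minus_def sandwich_nest)?, (simp add: tabs_minus)?,
   (simp add: weyl_def ric scalE kdelta_def Rn[OF AC] idx4 WA_def hat_def Mx_def pI_def pJ_def sg_def cE_def)?, (simp add: field_simps)?)

lemma ent_minus_0_3: "weyl_minus R 0 1 1 2 = - (WA R (-1) 0 2 / 2)"
  by ((simp only: weyl_minus_def sandwich_nest)?, (simp add: tabs_minus)?,
   (simp add: weyl_def ric scalE kdelta_def Rn[OF AC] idx4 WA_def hat_def Mx_def pI_def pJ_def sg_def cE_def)?, (simp add: field_simps)?)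

lemma ent_minus_0_4: "weyl_minus R 0 1 1 3 = (WA R (-1) 0 1 / 2)"
  by ((simp only: weyl_minus_def sandwich_nest)?, (simp add: tabs_minus)?,
   (simp add: weyl_def ric scalE kdelta_def Rn[OF AC] idx4 WA_def hat_def Mx_def pI_def pJ_def sg_def cE_def)?, (simp add: field_simps)?)

lemma ent_minus_0_5: "weyl_minus R 0 1 2 3 = - (WA R (-1) 0 0 / 2)"
  by ((simp only: weyl_minus_def sandwich_nest)?, (simp add: tabs_minus)?,
   (simp add: weyl_def ric scalE kdelta_def Rn[OF AC] idx4 WA_def hat_def Mx_def pI_def pJ_def sg_def cE_def)?, (simp add: field_simps)?)

lemma ent_minus_1_0: "weyl_minus R 0 2 0 1 = (WA R (-1) 1 0 / 2)"
  by ((simp only: weyl_minus_def sandwich_nest)?, (simp add: tabs_minus)?,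
   (simp add: weyl_def ric scalE kdelta_def Rn[OF AC] idx4 WA_def hat_def Mx_def pI_def pJ_def sg_def cE_def)?, (simp add: field_simps)?)

lemma ent_minus_1_1: "weyl_minus R 0 2 0 2 = (WA R (-1) 1 1 / 2)"
  by ((simp only: weyl_minus_def sandwich_nest)?, (simp add: tabs_minus)?,
   (simp add: weyl_def ric scalE kdelta_def Rn[OF AC] idx4 WA_def hat_def Mx_def pI_def pJ_def sg_def cE_def)?, (simp add: field_simps)?)

lemma ent_minus_1_2: "weyl_minus R 0 2 0 3 = (WA R (-1) 1 2 / 2)"
  by ((simp only: weyl_minus_def sandwich_nest)?, (simp add: tabs_minus)?,
   (simp add: weyl_def ric scalE kdelta_def Rn[OF AC] idx4 WA_def hat_def Mx_def pI_def pJ_def sg_def cE_def)?, (simp add: field_simps)?)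

lemma ent_minus_1_3: "weyl_minus R 0 2 1 2 = - (WA R (-1) 1 2 / 2)"
  by ((simp only: weyl_minus_def sandwich_nest)?, (simp add: tabs_minus)?,
   (simp add: weyl_def ric scalE kdelta_def Rn[OF AC] idx4 WA_def hat_def Mx_def pI_def pJ_def sg_def cE_def)?, (simp add: field_simps)?)

lemma ent_minus_1_4: "weyl_minus R 0 2 1 3 = (WA R (-1) 1 1 / 2)"
  by ((simp only: weyl_minus_def sandwich_nest)?, (simp add: tabs_minus)?,
   (simp add: weyl_def ric scalE kdelta_def Rn[OF AC] idx4 WA_def hat_def Mx_def pI_def pJ_def sg_def cE_def)?, (simp add: field_simps)?)

lemma ent_minus_1_5: "weyl_minus R 0 2 2 3 = - (WA R (-1) 1 0 / 2)"
  by ((simp only: weyl_minus_def sandwich_nest)?, (simp add: tabs_minus)?,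
   (simp add: weyl_def ric scalE kdelta_def Rn[OF AC] idx4 WA_def hat_def Mx_def pI_def pJ_def sg_def cE_def)?, (simp add: field_simps)?)

lemma ent_minus_2_0: "weyl_minus R 0 3 0 1 = (WA R (-1) 2 0 / 2)"
  by ((simp only: weyl_minus_def sandwich_nest)?, (simp add: tabs_minus)?,
   (simp add: weyl_def ric scalE kdelta_def Rn[OF AC] idx4 WA_def hat_def Mx_def pI_def pJ_def sg_def cE_def)?, (simp add: field_simps)?)

lemma ent_minus_2_1: "weyl_minus R 0 3 0 2 = (WA R (-1) 2 1 / 2)"
  by ((simp only: weyl_minus_def sandwich_nest)?, (simp add: tabs_minus)?,
   (simp add: weyl_def ric scalE kdelta_def Rn[OF AC] idx4 WA_def hat_def Mx_def pI_def pJ_def sg_def cE_def)?, (simp add: field_simps)?)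

lemma ent_minus_2_2: "weyl_minus R 0 3 0 3 = (WA R (-1) 2 2 / 2)"
  by ((simp only: weyl_minus_def sandwich_nest)?, (simp add: tabs_minus)?,
   (simp add: weyl_def ric scalE kdelta_def Rn[OF AC] idx4 WA_def hat_def Mx_def pI_def pJ_def sg_def cE_def)?, (simp add: field_simps)?)

lemma ent_minus_2_3: "weyl_minus R 0 3 1 2 = - (WA R (-1) 2 2 / 2)"
  by ((simp only: weyl_minus_def sandwich_nest)?, (simp add: tabs_minus)?,
   (simp add: weyl_def ric scalE kdelta_def Rn[OF AC] idx4 WA_def hat_def Mx_def pI_def pJ_def sg_def cE_def)?, (simp add: field_simps)?)

lemma ent_minus_2_4: "weyl_minus R 0 3 1 3 = (WA R (-1) 2 1 / 2)"
  by ((simp only: weyl_minus_def sandwich_nest)?, (simp add: tabs_minus)?,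
   (simp add: weyl_def ric scalE kdelta_def Rn[OF AC] idx4 WA_def hat_def Mx_def pI_def pJ_def sg_def cE_def)?, (simp add: field_simps)?)

lemma ent_minus_2_5: "weyl_minus R 0 3 2 3 = - (WA R (-1) 2 0 / 2)"
  by ((simp only: weyl_minus_def sandwich_nest)?, (simp add: tabs_minus)?,
   (simp add: weyl_def ric scalE kdelta_def Rn[OF AC] idx4 WA_def hat_def Mx_def pI_def pJ_def sg_def cE_def)?, (simp add: field_simps)?)

lemma ent_minus_3_0: "weyl_minus R 1 2 0 1 = - (WA R (-1) 2 0 / 2)"
  by ((simp only: weyl_minus_def sandwich_nest)?, (simp add: tabs_minus)?,
   (simp add: weyl_def ric scalE kdelta_def Rn[OF AC] idx4 WA_def hat_def Mx_def pI_def pJ_def sg_def cE_def)?, (simp add: field_simps)?)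

lemma ent_minus_3_1: "weyl_minus R 1 2 0 2 = - (WA R (-1) 2 1 / 2)"
  by ((simp only: weyl_minus_def sandwich_nest)?, (simp add: tabs_minus)?,
   (simp add: weyl_def ric scalE kdelta_def Rn[OF AC] idx4 WA_def hat_def Mx_def pI_def pJ_def sg_def cE_def)?, (simp add: field_simps)?)

lemma ent_minus_3_2: "weyl_minus R 1 2 0 3 = - (WA R (-1) 2 2 / 2)"
  by ((simp only: weyl_minus_def sandwich_nest)?, (simp add: tabs_minus)?,
   (simp add: weyl_def ric scalE kdelta_def Rn[OF AC] idx4 WA_def hat_def Mx_def pI_def pJ_def sg_def cE_def)?, (simp add: field_simps)?)

lemma ent_minus_3_3: "weyl_minus R 1 2 1 2 = (WA R (-1) 2 2 / 2)"
  by ((simp only: weyl_minus_def sandwich_nest)?, (simp add: tabs_minus)?,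
   (simp add: weyl_def ric scalE kdelta_def Rn[OF AC] idx4 WA_def hat_def Mx_def pI_def pJ_def sg_def cE_def)?, (simp add: field_simps)?)

lemma ent_minus_3_4: "weyl_minus R 1 2 1 3 = - (WA R (-1) 2 1 / 2)"
  by ((simp only: weyl_minus_def sandwich_nest)?, (simp add: tabs_minus)?,
   (simp add: weyl_def ric scalE kdelta_def Rn[OF AC] idx4 WA_def hat_def Mx_def pI_def pJ_def sg_def cE_def)?, (simp add: field_simps)?)

lemma ent_minus_3_5: "weyl_minus R 1 2 2 3 = (WA R (-1) 2 0 / 2)"
  by ((simp only: weyl_minus_def sandwich_nest)?, (simp add: tabs_minus)?,
   (simp add: weyl_def ric scalE kdelta_def Rn[OF AC] idx4 WA_def hat_def Mx_def pI_def pJ_def sg_def cE_def)?, (simp add: field_simps)?)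

lemma ent_minus_4_0: "weyl_minus R 1 3 0 1 = (WA R (-1) 1 0 / 2)"
  by ((simp only: weyl_minus_def sandwich_nest)?, (simp add: tabs_minus)?,
   (simp add: weyl_def ric scalE kdelta_def Rn[OF AC] idx4 WA_def hat_def Mx_def pI_def pJ_def sg_def cE_def)?, (simp add: field_simps)?)

lemma ent_minus_4_1: "weyl_minus R 1 3 0 2 = (WA R (-1) 1 1 / 2)"
  by ((simp only: weyl_minus_def sandwich_nest)?, (simp add: tabs_minus)?,
   (simp add: weyl_def ric scalE kdelta_def Rn[OF AC] idx4 WA_def hat_def Mx_def pI_def pJ_def sg_def cE_def)?, (simp add: field_simps)?)

lemma ent_minus_4_2: "weyl_minus R 1 3 0 3 = (WA R (-1) 1 2 / 2)"
  by ((simp only: weyl_minus_def sandwich_nest)?, (simp add: tabs_minus)?,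
   (simp add: weyl_def ric scalE kdelta_def Rn[OF AC] idx4 WA_def hat_def Mx_def pI_def pJ_def sg_def cE_def)?, (simp add: field_simps)?)

lemma ent_minus_4_3: "weyl_minus R 1 3 1 2 = - (WA R (-1) 1 2 / 2)"
  by ((simp only: weyl_minus_def sandwich_nest)?, (simp add: tabs_minus)?,
   (simp add: weyl_def ric scalE kdelta_def Rn[OF AC] idx4 WA_def hat_def Mx_def pI_def pJ_def sg_def cE_def)?, (simp add: field_simps)?)

lemma ent_minus_4_4: "weyl_minus R 1 3 1 3 = (WA R (-1) 1 1 / 2)"
  by ((simp only: weyl_minus_def sandwich_nest)?, (simp add: tabs_minus)?,
   (simp add: weyl_def ric scalE kdelta_def Rn[OF AC] idx4 WA_def hat_def Mx_def pI_def pJ_def sg_def cE_def)?, (simp add: field_simps)?)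

lemma ent_minus_4_5: "weyl_minus R 1 3 2 3 = - (WA R (-1) 1 0 / 2)"
  by ((simp only: weyl_minus_def sandwich_nest)?, (simp add: tabs_minus)?,
   (simp add: weyl_def ric scalE kdelta_def Rn[OF AC] idx4 WA_def hat_def Mx_def pI_def pJ_def sg_def cE_def)?, (simp add: field_simps)?)

lemma ent_minus_5_0: "weyl_minus R 2 3 0 1 = - (WA R (-1) 0 0 / 2)"
  by ((simp only: weyl_minus_def sandwich_nest)?, (simp add: tabs_minus)?,
   (simp add: weyl_def ric scalE kdelta_def Rn[OF AC] idx4 WA_def hat_def Mx_def pI_def pJ_def sg_def cE_def)?, (simp add: field_simps)?)

lemma ent_minus_5_1: "weyl_minus R 2 3 0 2 = - (WA R (-1) 0 1 / 2)"
  by ((simp only: weyl_minus_def sandwich_nest)?, (simp add: tabs_minus)?,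
   (simp add: weyl_def ric scalE kdelta_def Rn[OF AC] idx4 WA_def hat_def Mx_def pI_def pJ_def sg_def cE_def)?, (simp add: field_simps)?)

lemma ent_minus_5_2: "weyl_minus R 2 3 0 3 = - (WA R (-1) 0 2 / 2)"
  by ((simp only: weyl_minus_def sandwich_nest)?, (simp add: tabs_minus)?,
   (simp add: weyl_def ric scalE kdelta_def Rn[OF AC] idx4 WA_def hat_def Mx_def pI_def pJ_def sg_def cE_def)?, (simp add: field_simps)?)

lemma ent_minus_5_3: "weyl_minus R 2 3 1 2 = (WA R (-1) 0 2 / 2)"
  by ((simp only: weyl_minus_def sandwich_nest)?, (simp add: tabs_minus)?,
   (simp add: weyl_def ric scalE kdelta_def Rn[OF AC] idx4 WA_def hat_def Mx_def pI_def pJ_def sg_def cE_def)?, (simp add: field_simps)?)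

lemma ent_minus_5_4: "weyl_minus R 2 3 1 3 = - (WA R (-1) 0 1 / 2)"
  by ((simp only: weyl_minus_def sandwich_nest)?, (simp add: tabs_minus)?,
   (simp add: weyl_def ric scalE kdelta_def Rn[OF AC] idx4 WA_def hat_def Mx_def pI_def pJ_def sg_def cE_def)?, (simp add: field_simps)?)

lemma ent_minus_5_5: "weyl_minus R 2 3 2 3 = (WA R (-1) 0 0 / 2)"
  by ((simp only: weyl_minus_def sandwich_nest)?, (simp add: tabs_minus)?,
   (simp add: weyl_def ric scalE kdelta_def Rn[OF AC] idx4 WA_def hat_def Mx_def pI_def pJ_def sg_def cE_def)?, (simp add: field_simps)?)

lemmas ent_minus = ent_minus_0_0[unfolded One_nat_def] ent_minus_0_1[unfolded One_nat_def] ent_minus_0_2[unfolded One_nat_def] ent_minus_0_3[unfolded One_nat_def] ent_minus_0_4[unfolded One_nat_def] ent_minus_0_5[unfolded One_nat_def] ent_minus_1_0[unfolded One_nat_def] ent_minus_1_1[unfolded One_nat_def] ent_minus_1_2[unfolded One_nat_def] ent_minus_1_3[unfolded One_nat_def] ent_minus_1_4[unfolded One_nat_def] ent_minus_1_5[unfolded One_nat_def] ent_minus_2_0[unfolded One_nat_def] ent_minus_2_1[unfolded One_nat_def] ent_minus_2_2[unfolded One_nat_def] ent_minus_2_3[unfolded One_nat_def] ent_minus_2_4[unfolded One_nat_def] ent_minus_2_5[unfolded One_nat_def] ent_minus_3_0[unfolded One_nat_def] ent_minus_3_1[unfolded One_nat_def] ent_minus_3_2[unfolded One_nat_def] ent_minus_3_3[unfolded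 One_nat_def] ent_minus_3_4[unfolded One_nat_def] ent_minus_3_5[unfolded One_nat_def] ent_minus_4_0[unfolded One_nat_def] ent_minus_4_1[unfolded One_nat_def] ent_minus_4_2[unfolded One_nat_def] ent_minus_4_3[unfolded One_nat_def] ent_minus_4_4[unfolded One_nat_def] ent_minus_4_5[unfolded One_nat_def] ent_minus_5_0[unfolded One_nat_def] ent_minus_5_1[unfolded One_nat_def] ent_minus_5_2[unfolded One_nat_def] ent_minus_5_3[unfolded One_nat_def] ent_minus_5_4[unfolded One_nat_def] ent_minus_5_5[unfolded One_nat_def]

lemma wm_as1: "weyl_minus R j i k l = - weyl_minus R i j k l"
  unfolding weyl_minus_def by (rule sand_as1) (rule pm_as1)
lemma wm_as2: "weyl_minus R i j l k = - weyl_minus R i j k l"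
  unfolding weyl_minus_def by (rule sand_as2) (rule pm_as2)

lemma normWp: "(1/4) * (\<Sum>i\<in>idx. \<Sum>j\<in>idx. \<Sum>k\<in>idx. \<Sum>l\<in>idx. (weyl_plus R i j k l)^2) = sA (WA R 1)"
  by (subst norm_as[OF wp_as1 wp_as2]) (simp add: ent_plus sA_def sum3 power_divide)

lemma normWm: "(1/4) * (\<Sum>i\<in>idx. \<Sum>j\<in>idx. \<Sum>k\<in>idx. \<Sum>l\<in>idx. (weyl_minus R i j k l)^2) = sA (WA R (-1))"
  by (subst norm_as[OF wm_as1 wm_as2]) (simp add: ent_minus sA_def sum3 power_divide)

end
definition om :: "(nat \<Rightarrow> real) \<Rightarrow> (nat \<Rightarrow> real) \<Rightarrow> nat \<Rightarrow> nat \<Rightarrow> real" where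
  "om x y i j = x i * y j - x j * y i"

lemma gramL: "inner4 x x * inner4 y y - (inner4 x y)^2 = (om x y 0 1)^2 + (om x y 0 2)^2 + (om x y 0 3)^2 + (om x y 1 2)^2 + (om x y 1 3)^2 + (om x y 2 3)^2"
  by (simp add: inner4_def sum_idx om_def power2_eq_square algebra_simps)

lemma numL: assumes AC: "alg_curv R"
  shows "(\<Sum>i\<in>idx. \<Sum>j\<in>idx. \<Sum>k\<in>idx. \<Sum>l\<in>idx. R i j k l * x i * y j * x k * y l) = R 0 1 0 1 * om x y 0 1 * om x y 0 1 + R 0 1 0 2 * om x y 0 1 * om x y 0 2 + R 0 1 0 3 * om x y 0 1 * om x y 0 3 + R 0 1 1 2 * om x y 0 1 * om x y 1 2 + R 0 1 1 3 * om x y 0 1 * om x y 1 3 + R 0 1 2 3 * om x y 0 1 * om x y 2 3 + R 0 2 0 1 * om x y 0 2 * om x y 0 1 + R 0 2 0 2 * om x y 0 2 * om x y 0 2 + R 0 2 0 3 * om x y 0 2 * om x y 0 3 + R 0 2 1 2 * om x y 0 2 * om x y 1 2 + R 0 2 1 3 * om x y 0 2 * om x y 1 3 + R 0 2 2 3 * om x y 0 2 * om x y 2 3 + R 0 3 0 1 * om x y 0 3 * om x y 0 1 + R 0 3 0 2 * om x y 0 3 * om x y 0 2 + R 0 3 0 3 * om x y 0 3 * om x y 0 3 + R 0 3 1 2 * om x y 0 3 * om x y 1 2 + R 0 3 1 3 * om x y 0 3 * om x y 1 3 + R 0 3 2 3 * om x y 0 3 * om x y 2 3 + R 1 2 0 1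 * om x y 1 2 * om x y 0 1 + R 1 2 0 2 * om x y 1 2 * om x y 0 2 + R 1 2 0 3 * om x y 1 2 * om x y 0 3 + R 1 2 1 2 * om x y 1 2 * om x y 1 2 + R 1 2 1 3 * om x y 1 2 * om x y 1 3 + R 1 2 2 3 * om x y 1 2 * om x y 2 3 + R 1 3 0 1 * om x y 1 3 * om x y 0 1 + R 1 3 0 2 * om x y 1 3 * om x y 0 2 + R 1 3 0 3 * om x y 1 3 * om x y 0 3 + R 1 3 1 2 * om x y 1 3 * om x y 1 2 + R 1 3 1 3 * om x y 1 3 * om x y 1 3 + R 1 3 2 3 * om x y 1 3 * om x y 2 3 + R 2 3 0 1 * om x y 2 3 * om x y 0 1 + R 2 3 0 2 * om x y 2 3 * om x y 0 2 + R 2 3 0 3 * om x y 2 3 * om x y 0 3 + R 2 3 1 2 * om x y 2 3 * om x y 1 2 + R 2 3 1 3 * om x y 2 3 * om x y 1 3 + R 2 3 2 3 * om x y 2 3 * om x y 2 3"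
  by (simp add: sum_idx Rn[OF AC] idx4 om_def algebra_simps)
definition wa :: "(nat \<Rightarrow> real) \<Rightarrow> nat \<Rightarrow> nat \<Rightarrow> real" where
  "wa al i j = (if i = 0 \<and> j = 1 then al 0 else if i = 1 \<and> j = 0 then - al 0 else if i = 0 \<and> j = 2 then al 1 else if i = 2 \<and> j = 0 then - al 1 else if i = 0 \<and> j = 3 then al 2 else if i = 3 \<and> j = 0 then - al 2 else if i = 1 \<and> j = 2 then al 3 else if i = 2 \<and> j = 1 then - al 3 else if i = 1 \<and> j = 3 then al 4 else if i = 3 \<and> j = 1 then - al 4 else if i = 2 \<and> j = 3 then al 5 else if i = 3 \<and> j = 2 then - al 5 else 0)"

lemma li_helper: assumes "i\<in>idx" "j\<in>idx" "x i = 0" "x j \<noteq> 0" "y i \<noteq> 0" "y j = 0"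
  shows "lin_indep2 x y"
  unfolding lin_indep2_def
proof (intro allI impI)
  fix a b assume h: "\<forall>t\<in>idx. a * x t + b * y t = 0"
  from h assms(1) have "a * x i + b * y i = 0" by blast
  with assms have b: "b = 0" by simp
  from h assms(2) have "a * x j + b * y j = 0" by blast
  with assms b show "a = 0 \<and> b = 0" by simp
qed

lemma decomp0: fixes al :: "nat \<Rightarrow> real" assumes pl: "al 0 * al 5 - al 1 * al 4 + al 2 * al 3 = 0" and nz: "al 0 \<noteq> 0"
  shows "\<exists>x y. lin_indep2 x y \<and> om x y 0 1 = al 0 \<and> om x y 0 2 = al 1 \<and> om x y 0 3 = al 2 \<and> om x y 1 2 = al 3 \<and> om x y 1 3 = al 4 \<and> om x y 2 3 = al 5"
proof (intro exI conjI)
  let ?x = "\<lambda>m. wa al 0 m / al 0" and ?y = "\<lambda>m. wa al 1 m"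
  show "lin_indep2 ?x ?y" by (rule li_helper[of 0 1]) (use nz in \<open>simp_all add: wa_def idx4\<close>)
  show "om ?x ?y 0 1 = al 0" using pl nz by (simp add: om_def wa_def field_simps)
  show "om ?x ?y 0 2 = al 1" using pl nz by (simp add: om_def wa_def field_simps)
  show "om ?x ?y 0 3 = al 2" using pl nz by (simp add: om_def wa_def field_simps)
  show "om ?x ?y 1 2 = al 3" using pl nz by (simp add: om_def wa_def field_simps)
  show "om ?x ?y 1 3 = al 4" using pl nz by (simp add: om_def wa_def field_simps)
  show "om ?x ?y 2 3 = al 5" using pl nz by (simp add: om_def wa_def field_simps)
qed

lemma decomp1: fixes al :: "nat \<Rightarrow> real" assumes pl: "al 0 * al 5 - al 1 * al 4 + al 2 * al 3 = 0" and nz: "al 1 \<noteq> 0"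
  shows "\<exists>x y. lin_indep2 x y \<and> om x y 0 1 = al 0 \<and> om x y 0 2 = al 1 \<and> om x y 0 3 = al 2 \<and> om x y 1 2 = al 3 \<and> om x y 1 3 = al 4 \<and> om x y 2 3 = al 5"
proof (intro exI conjI)
  let ?x = "\<lambda>m. wa al 0 m / al 1" and ?y = "\<lambda>m. wa al 2 m"
  show "lin_indep2 ?x ?y" by (rule li_helper[of 0 2]) (use nz in \<open>simp_all add: wa_def idx4\<close>)
  show "om ?x ?y 0 1 = al 0" using pl nz by (simp add: om_def wa_def field_simps)
  show "om ?x ?y 0 2 = al 1" using pl nz by (simp add: om_def wa_def field_simps)
  show "om ?x ?y 0 3 = al 2" using pl nz by (simp add: om_def wa_def field_simps)
  show "om ?x ?y 1 2 = al 3" using pl nz by (simp add: om_def wa_def field_simps)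
  show "om ?x ?y 1 3 = al 4" using pl nz by (simp add: om_def wa_def field_simps)
  show "om ?x ?y 2 3 = al 5" using pl nz by (simp add: om_def wa_def field_simps)
qed

lemma decomp2: fixes al :: "nat \<Rightarrow> real" assumes pl: "al 0 * al 5 - al 1 * al 4 + al 2 * al 3 = 0" and nz: "al 2 \<noteq> 0"
  shows "\<exists>x y. lin_indep2 x y \<and> om x y 0 1 = al 0 \<and> om x y 0 2 = al 1 \<and> om x y 0 3 = al 2 \<and> om x y 1 2 = al 3 \<and> om x y 1 3 = al 4 \<and> om x y 2 3 = al 5"
proof (intro exI conjI)
  let ?x = "\<lambda>m. wa al 0 m / al 2" and ?y = "\<lambda>m. wa al 3 m"
  show "lin_indep2 ?x ?y" by (rule li_helper[of 0 3]) (use nz in \<open>simp_all add: wa_def idx4\<close>)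
  show "om ?x ?y 0 1 = al 0" using pl nz by (simp add: om_def wa_def field_simps)
  show "om ?x ?y 0 2 = al 1" using pl nz by (simp add: om_def wa_def field_simps)
  show "om ?x ?y 0 3 = al 2" using pl nz by (simp add: om_def wa_def field_simps)
  show "om ?x ?y 1 2 = al 3" using pl nz by (simp add: om_def wa_def field_simps)
  show "om ?x ?y 1 3 = al 4" using pl nz by (simp add: om_def wa_def field_simps)
  show "om ?x ?y 2 3 = al 5" using pl nz by (simp add: om_def wa_def field_simps)
qed

lemma decomp3: fixes al :: "nat \<Rightarrow> real" assumes pl: "al 0 * al 5 - al 1 * al 4 + al 2 * al 3 = 0" and nz: "al 3 \<noteq> 0"
  shows "\<exists>x y. lin_indep2 x y \<and> om x y 0 1 = al 0 \<and> om x y 0 2 = al 1 \<and> om x y 0 3 = al 2 \<and> om x y 1 2 = al 3 \<and> om x y 1 3 = al 4 \<and> om x y 2 3 = al 5"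
proof (intro exI conjI)
  let ?x = "\<lambda>m. wa al 1 m / al 3" and ?y = "\<lambda>m. wa al 2 m"
  show "lin_indep2 ?x ?y" by (rule li_helper[of 1 2]) (use nz in \<open>simp_all add: wa_def idx4\<close>)
  show "om ?x ?y 0 1 = al 0" using pl nz by (simp add: om_def wa_def field_simps)
  show "om ?x ?y 0 2 = al 1" using pl nz by (simp add: om_def wa_def field_simps)
  show "om ?x ?y 0 3 = al 2" using pl nz by (simp add: om_def wa_def field_simps)
  show "om ?x ?y 1 2 = al 3" using pl nz by (simp add: om_def wa_def field_simps)
  show "om ?x ?y 1 3 = al 4" using pl nz by (simp add: om_def wa_def field_simps)
  show "om ?x ?y 2 3 = al 5" using pl nz by (simp add: om_def wa_def field_simps)
qed

lemma decomp4: fixes al :: "nat \<Rightarrow> real" assumes pl: "al 0 * al 5 - al 1 * al 4 + al 2 * al 3 = 0" and nz: "al 4 \<noteq> 0"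
  shows "\<exists>x y. lin_indep2 x y \<and> om x y 0 1 = al 0 \<and> om x y 0 2 = al 1 \<and> om x y 0 3 = al 2 \<and> om x y 1 2 = al 3 \<and> om x y 1 3 = al 4 \<and> om x y 2 3 = al 5"
proof (intro exI conjI)
  let ?x = "\<lambda>m. wa al 1 m / al 4" and ?y = "\<lambda>m. wa al 3 m"
  show "lin_indep2 ?x ?y" by (rule li_helper[of 1 3]) (use nz in \<open>simp_all add: wa_def idx4\<close>)
  show "om ?x ?y 0 1 = al 0" using pl nz by (simp add: om_def wa_def field_simps)
  show "om ?x ?y 0 2 = al 1" using pl nz by (simp add: om_def wa_def field_simps)
  show "om ?x ?y 0 3 = al 2" using pl nz by (simp add: om_def wa_def field_simps)
  show "om ?x ?y 1 2 = al 3" using pl nz by (simp add: om_def wa_def field_simps)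
  show "om ?x ?y 1 3 = al 4" using pl nz by (simp add: om_def wa_def field_simps)
  show "om ?x ?y 2 3 = al 5" using pl nz by (simp add: om_def wa_def field_simps)
qed

lemma decomp5: fixes al :: "nat \<Rightarrow> real" assumes pl: "al 0 * al 5 - al 1 * al 4 + al 2 * al 3 = 0" and nz: "al 5 \<noteq> 0"
  shows "\<exists>x y. lin_indep2 x y \<and> om x y 0 1 = al 0 \<and> om x y 0 2 = al 1 \<and> om x y 0 3 = al 2 \<and> om x y 1 2 = al 3 \<and> om x y 1 3 = al 4 \<and> om x y 2 3 = al 5"
proof (intro exI conjI)
  let ?x = "\<lambda>m. wa al 2 m / al 5" and ?y = "\<lambda>m. wa al 3 m"
  show "lin_indep2 ?x ?y" by (rule li_helper[of 2 3]) (use nz in \<open>simp_all add: wa_def idx4\<close>)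
  show "om ?x ?y 0 1 = al 0" using pl nz by (simp add: om_def wa_def field_simps)
  show "om ?x ?y 0 2 = al 1" using pl nz by (simp add: om_def wa_def field_simps)
  show "om ?x ?y 0 3 = al 2" using pl nz by (simp add: om_def wa_def field_simps)
  show "om ?x ?y 1 2 = al 3" using pl nz by (simp add: om_def wa_def field_simps)
  show "om ?x ?y 1 3 = al 4" using pl nz by (simp add: om_def wa_def field_simps)
  show "om ?x ?y 2 3 = al 5" using pl nz by (simp add: om_def wa_def field_simps)
qed

context
  fixes R :: tensor4
  assumes AC: "alg_curv R" and EIN: "einstein_at R"
begin

lemma lt3: "(p::nat) < 3 \<longleftrightarrow> p = 0 \<or> p = 1 \<or> p = 2" by auto

lemma WA_sym: "p < 3 \<Longrightarrow> q < 3 \<Longrightarrow> WA R t p q = WA R t q p"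
  unfolding lt3
  by (elim disjE; simp add: WA_def hat_def Mx_def pI_def pJ_def sg_def Rn[OF AC] idx4 algebra_simps)

lemma WA_tr: "WA R t 0 0 + WA R t 1 1 + WA R t 2 2 = 0"
  using bianchi[OF AC]
  by (simp add: WA_def hat_def Mx_def pI_def pJ_def sg_def cE_def Rn[OF AC] idx4 subs[OF AC EIN, unfolded One_nat_def] field_simps)

lemma Qid: fixes al :: "nat \<Rightarrow> real"
  assumes al: "\<And>p. al p = (if p = 0 then (u 0 + v 0)/2 else if p = 1 then (u 1 + v 1)/2 else if p = 2 then (u 2 + v 2)/2 else if p = 3 then (u 2 - v 2)/2 else if p = 4 then (v 1 - u 1)/2 else (u 0 - v 0)/2)"
  shows "R 0 1 0 1 * al 0 * al 0 + R 0 1 0 2 * al 0 * al 1 + R 0 1 0 3 * al 0 * al 2 + R 0 1 1 2 * al 0 * al 3 + R 0 1 1 3 * al 0 * al 4 + R 0 1 2 3 * al 0 * al 5 + R 0 2 0 1 * al 1 * al 0 + R 0 2 0 2 * al 1 * al 1 + R 0 2 0 3 * al 1 * al 2 + R 0 2 1 2 * al 1 * al 3 + R 0 2 1 3 * al 1 * al 4 + R 0 2 2 3 * al 1 * al 5 + R 0 3 0 1 * al 2 * al 0 + R 0 3 0 2 * al 2 * al 1 + R 0 3 0 3 * al 2 * al 2 + R 0 3 1 2 * al 2 * al 3 + R 0 3 1 3 * al 2 * al 4 + R 0 3 2 3 * al 2 * al 5 + R 1 2 0 1 * al 3 * al 0 + R 1 2 0 2 * al 3 * al 1 + R 1 2 0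 3 * al 3 * al 2 + R 1 2 1 2 * al 3 * al 3 + R 1 2 1 3 * al 3 * al 4 + R 1 2 2 3 * al 3 * al 5 + R 1 3 0 1 * al 4 * al 0 + R 1 3 0 2 * al 4 * al 1 + R 1 3 0 3 * al 4 * al 2 + R 1 3 1 2 * al 4 * al 3 + R 1 3 1 3 * al 4 * al 4 + R 1 3 2 3 * al 4 * al 5 + R 2 3 0 1 * al 5 * al 0 + R 2 3 0 2 * al 5 * al 1 + R 2 3 0 3 * al 5 * al 2 + R 2 3 1 2 * al 5 * al 3 + R 2 3 1 3 * al 5 * al 4 + R 2 3 2 3 * al 5 * al 5 = cE R / 6 * (ns u + ns v) + (qf (WA R 1) u + qf (WA R (-1)) v) / 2"
  apply (simp only: al qf_def sum3 WA_def hat_def Mx_def pI_def pJ_def sg_def cE_def ns_def)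
  apply (simp add: Rn[OF AC] idx4 subs[OF AC EIN, unfolded One_nat_def])
  apply (simp add: field_simps power2_eq_square)
  done

lemma secL: assumes nu: "ns u = 1" and nv: "ns v = 1"
  shows "\<exists>x y. lin_indep2 x y \<and> sec_curv R x y = scal R / 12 + (qf (WA R 1) u + qf (WA R (-1)) v) / 2"
proof -
  define al :: "nat \<Rightarrow> real" where "al p = (if p = 0 then (u 0 + v 0)/2 else if p = 1 then (u 1 + v 1)/2 else if p = 2 then (u 2 + v 2)/2 else if p = 3 then (u 2 - v 2)/2 else if p = 4 then (v 1 - u 1)/2 else (u 0 - v 0)/2)" for p
  have al': "\<And>p. al p = (if p = 0 then (u 0 + v 0)/2 else if p = 1 then (u 1 + v 1)/2 else if p = 2 then (u 2 + v 2)/2 else if p = 3 then (u 2 - v 2)/2 else if p = 4 then (v 1 - u 1)/2 else (u 0 - v 0)/2)" by (simp add: al_def)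
  have pl: "al 0 * al 5 - al 1 * al 4 + al 2 * al 3 = 0"
    using nu nv by (simp add: al_def ns_def field_simps power2_eq_square)
  have sq: "(al 0)^2 + (al 1)^2 + (al 2)^2 + (al 3)^2 + (al 4)^2 + (al 5)^2 = 1"
    using nu nv by (simp add: al_def ns_def field_simps power2_eq_square)
  have nz: "al 0 \<noteq> 0 \<or> al 1 \<noteq> 0 \<or> al 2 \<noteq> 0 \<or> al 3 \<noteq> 0 \<or> al 4 \<noteq> 0 \<or> al 5 \<noteq> 0"
  proof (rule ccontr)
    assume "\<not> ?thesis"
    then have "(al 0)^2 + (al 1)^2 + (al 2)^2 + (al 3)^2 + (al 4)^2 + (al 5)^2 = 0" by simp
    with sq show False by simp
  qed
  obtain x y where xy: "lin_indep2 x y" "om x y 0 1 = al 0" "om x y 0 2 = al 1" "om x y 0 3 = al 2"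
     "om x y 1 2 = al 3" "om x y 1 3 = al 4" "om x y 2 3 = al 5"
    using nz decomp0[OF pl] decomp1[OF pl] decomp2[OF pl] decomp3[OF pl] decomp4[OF pl] decomp5[OF pl]
    by blast
  have "sec_curv R x y = (R 0 1 0 1 * al 0 * al 0 + R 0 1 0 2 * al 0 * al 1 + R 0 1 0 3 * al 0 * al 2 + R 0 1 1 2 * al 0 * al 3 + R 0 1 1 3 * al 0 * al 4 + R 0 1 2 3 * al 0 * al 5 + R 0 2 0 1 * al 1 * al 0 + R 0 2 0 2 * al 1 * al 1 + R 0 2 0 3 * al 1 * al 2 + R 0 2 1 2 * al 1 * al 3 + R 0 2 1 3 * al 1 * al 4 + R 0 2 2 3 * al 1 * al 5 + R 0 3 0 1 * al 2 * al 0 + R 0 3 0 2 * al 2 * al 1 + R 0 3 0 3 * al 2 * al 2 + R 0 3 1 2 * al 2 * al 3 + R 0 3 1 3 * al 2 * al 4 + R 0 3 2 3 * al 2 * al 5 + R 1 2 0 1 * al 3 * al 0 + R 1 2 0 2 * al 3 * al 1 + R 1 2 0 3 * al 3 * al 2 + R 1 2 1 2 * al 3 * al 3 + R 1 2 1 3 * al 3 * al 4 + R 1 2 2 3 * al 3 * al 5 + R 1 3 0 1 * al 4 * al 0 + R 1 3 0 2 * al 4 * al 1 + R 1 3 0 3 * al 4 * al 2 + R 1 3 1 2 * al 4 * al 3 + R 1 3 1 3 * al 4 * al 4 + R 1 3 2 3 * al 4 * al 5 + R 2 3 0 1 * al 5 * al 0 + R 2 3 0 2 * al 5 * al 1 +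 R 2 3 0 3 * al 5 * al 2 + R 2 3 1 2 * al 5 * al 3 + R 2 3 1 3 * al 5 * al 4 + R 2 3 2 3 * al 5 * al 5) / ((al 0)^2 + (al 1)^2 + (al 2)^2 + (al 3)^2 + (al 4)^2 + (al 5)^2)"
    unfolding sec_curv_def numL[OF AC] gramL xy(2-7) ..
  also have "\<dots> = R 0 1 0 1 * al 0 * al 0 + R 0 1 0 2 * al 0 * al 1 + R 0 1 0 3 * al 0 * al 2 + R 0 1 1 2 * al 0 * al 3 + R 0 1 1 3 * al 0 * al 4 + R 0 1 2 3 * al 0 * al 5 + R 0 2 0 1 * al 1 * al 0 + R 0 2 0 2 * al 1 * al 1 + R 0 2 0 3 * al 1 * al 2 + R 0 2 1 2 * al 1 * al 3 + R 0 2 1 3 * al 1 * al 4 + R 0 2 2 3 * al 1 * al 5 + R 0 3 0 1 * al 2 * al 0 + R 0 3 0 2 * al 2 * al 1 + R 0 3 0 3 * al 2 * al 2 + R 0 3 1 2 * al 2 * al 3 + R 0 3 1 3 * al 2 * al 4 + R 0 3 2 3 * al 2 * al 5 + R 1 2 0 1 * al 3 * al 0 + R 1 2 0 2 * al 3 * al 1 + R 1 2 0 3 * al 3 * al 2 + R 1 2 1 2 * al 3 * al 3 + R 1 2 1 3 * al 3 * al 4 + R 1 2 2 3 * al 3 * al 5 + R 1 3 0 1 * al 4 * al 0 + R 1 3 0 2 * al 4 * al 1 + R 1 3 0 3 * al 4 * al 2 + R 1 3 1 2 * al 4 * al 3 + R 1 3 1 3 * al 4 * al 4 + R 1 3 2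 3 * al 4 * al 5 + R 2 3 0 1 * al 5 * al 0 + R 2 3 0 2 * al 5 * al 1 + R 2 3 0 3 * al 5 * al 2 + R 2 3 1 2 * al 5 * al 3 + R 2 3 1 3 * al 5 * al 4 + R 2 3 2 3 * al 5 * al 5" using sq by simp
  also have "\<dots> = cE R / 6 * (ns u + ns v) + (qf (WA R 1) u + qf (WA R (-1)) v) / 2"
    by (rule Qid[OF al'])
  also have "\<dots> = scal R / 12 + (qf (WA R 1) u + qf (WA R (-1)) v) / 2"
    using nu nv by (simp add: scalE[OF AC EIN])
  finally show ?thesis using xy(1) by blast
qed

end
lemma disc:
  fixes a b c :: real
  assumes H: "\<And>t. 0 \<le> a*t^2 + 2*b*t + c" and a: "0 \<le> a"
  shows "b^2 \<le> a*c"
proof (cases "a = 0")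
  case True
  have "b = 0"
  proof (rule ccontr)
    assume b: "b \<noteq> 0"
    have "0 \<le> a*(-(c+1)/(2*b))^2 + 2*b*(-(c+1)/(2*b)) + c" by (rule H)
    also have "\<dots> = -1" using True b by (simp add: field_simps)
    finally show False by simp
  qed
  thus ?thesis using True by simp
next
  case False
  hence ap: "a > 0" using a by simp
  have "0 \<le> a*(-b/a)^2 + 2*b*(-b/a) + c" by (rule H)
  also have "\<dots> = c - b^2/a" using ap by (simp add: field_simps power2_eq_square)
  finally have "b^2/a \<le> c" by simp
  thus ?thesis using ap by (simp add: field_simps mult.commute)
qed

definition vec3 :: "real \<Rightarrow> real \<Rightarrow> real \<Rightarrow> nat \<Rightarrow> real" where
  "vec3 x0 x1 x2 i = (if i = 0 then x0 else if i = 1 then x1 else x2)"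

lemma psd3:
  fixes a :: "nat \<Rightarrow> nat \<Rightarrow> real" and m :: real
  assumes sym: "\<And>p q. p < 3 \<Longrightarrow> q < 3 \<Longrightarrow> a p q = a q p"
    and tr: "a 0 0 + a 1 1 + a 2 2 = 0"
    and H: "\<And>u. m * ns u \<le> qf a u"
  shows "m \<le> 0 \<and> sA a \<le> 6 * m^2"
proof -
  have s01: "a 1 0 = a 0 1" and s02: "a 2 0 = a 0 2" and s12: "a 2 1 = a 1 2" using sym by simp_all
  note ss = s01[unfolded One_nat_def] s02 s12[unfolded One_nat_def]
  have H': "m * (x0^2 + x1^2 + x2^2) \<le> a 0 0 * x0^2 + a 1 1 * x1^2 + a 2 2 * x2^2
      + 2 * a 0 1 * x0 * x1 + 2 * a 0 2 * x0 * x2 + 2 * a 1 2 * x1 * x2" for x0 x1 x2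
    using H[of "vec3 x0 x1 x2"]
    by (simp add: ns_def qf_def sum3 vec3_def ss power2_eq_square algebra_simps)
  have d0: "0 \<le> a 0 0 - m" using H'[of 1 0 0] by simp
  have d1: "0 \<le> a 1 1 - m" using H'[of 0 1 0] by simp
  have d2: "0 \<le> a 2 2 - m" using H'[of 0 0 1] by simp
  have m01: "(a 0 1)^2 \<le> (a 0 0 - m) * (a 1 1 - m)"
  proof (rule disc[OF _ d0])
    fix t show "0 \<le> (a 0 0 - m) * t^2 + 2 * a 0 1 * t + (a 1 1 - m)"
      using H'[of t 1 0] by (simp add: algebra_simps)
  qed
  have m02: "(a 0 2)^2 \<le> (a 0 0 - m) * (a 2 2 - m)"
  proof (rule disc[OF _ d0])
    fix t show "0 \<le> (a 0 0 - m) * t^2 + 2 * a 0 2 * t + (a 2 2 - m)"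
      using H'[of t 0 1] by (simp add: algebra_simps)
  qed
  have m12: "(a 1 2)^2 \<le> (a 1 1 - m) * (a 2 2 - m)"
  proof (rule disc[OF _ d1])
    fix t show "0 \<le> (a 1 1 - m) * t^2 + 2 * a 1 2 * t + (a 2 2 - m)"
      using H'[of 0 t 1] by (simp add: algebra_simps)
  qed
  have a22: "a 2 2 = - a 0 0 - a 1 1" using tr by simp
  have eq: "sA a = 6 * m^2 - 2 * (((a 0 0 - m) * (a 1 1 - m) - (a 0 1)^2)
     + ((a 0 0 - m) * (a 2 2 - m) - (a 0 2)^2) + ((a 1 1 - m) * (a 2 2 - m) - (a 1 2)^2))"
    by (simp add: sA_def sum3 ss a22 power2_eq_square algebra_simps)
  have g: "0 \<le> ((a 0 0 - m) * (a 1 1 - m) - (a 0 1)^2)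
     + ((a 0 0 - m) * (a 2 2 - m) - (a 0 2)^2) + ((a 1 1 - m) * (a 2 2 - m) - (a 1 2)^2)"
    by (rule add_nonneg_nonneg[OF add_nonneg_nonneg]) (use m01 m02 m12 in simp_all)
  have key: "\<And>S X M::real. S = 6*M - 2*X \<Longrightarrow> 0 \<le> X \<Longrightarrow> S \<le> 6*M" by linarith
  have "sA a \<le> 6 * m^2" by (rule key[OF eq g])
  moreover have "m \<le> 0" using d0 d1 d2 tr by linarith
  ultimately show ?thesis by simp
qed

lemma homog:
  assumes H: "\<And>u. ns u = 1 \<Longrightarrow> k \<le> qf a u"
  shows "k * ns u \<le> qf a u"
proof (cases "ns u = 0")
  case True
  hence "(u 0)^2 = 0" "(u 1)^2 = 0" "(u 2)^2 = 0" unfolding ns_def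
    by (smt (verit) zero_le_power2)+
  hence "u 0 = 0" "u 1 = 0" "u 2 = 0" by simp_all
  thus ?thesis using True by (simp add: qf_def sum3)
next
  case False
  have np: "ns u > 0" using False unfolding ns_def
    by (smt (verit) zero_le_power2)
  define r where "r = sqrt (ns u)"
  have rp: "r > 0" and r2: "r^2 = ns u" using np by (simp_all add: r_def)
  define w where "w i = u i / r" for i
  have "ns w = ns u / r^2" by (simp add: ns_def w_def power_divide add_divide_distrib)
  hence "ns w = 1" using r2 np by simp
  hence "k \<le> qf a w" by (rule H)
  also have "qf a w = qf a u / r^2" using rp
    by (simp add: qf_def sum3 w_def power2_eq_square field_simps)
  finally have "k \<le> qf a u / ns u" using r2 by simp
  thus ?thesis using np by (simp add: field_simps)
qed

lemma core:
  fixes a b :: "nat \<Rightarrow> nat \<Rightarrow> real" and s :: real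
  assumes symA: "\<And>p q. p < 3 \<Longrightarrow> q < 3 \<Longrightarrow> a p q = a q p"
    and symB: "\<And>p q. p < 3 \<Longrightarrow> q < 3 \<Longrightarrow> b p q = b q p"
    and trA: "a 0 0 + a 1 1 + a 2 2 = 0" and trB: "b 0 0 + b 1 1 + b 2 2 = 0"
    and H: "\<And>u v. ns u = 1 \<Longrightarrow> ns v = 1 \<Longrightarrow> 0 \<le> s/6 + qf a u + qf b v"
  shows "0 \<le> s \<and> sqrt (sA a) + sqrt (sA b) \<le> s / sqrt 6"
proof -
  define e0 :: "nat \<Rightarrow> real" where "e0 i = (if i = 0 then 1 else 0)" for i
  have ne0: "ns e0 = 1" by (simp add: ns_def e0_def)
  define S where "S = {qf a u | u. ns u = 1}"
  define m where "m = Inf S"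
  have Sne: "S \<noteq> {}" using ne0 unfolding S_def by blast
  have bdd: "bdd_below S"
    unfolding bdd_below_def S_def
  proof (intro exI ballI)
    fix x assume "x \<in> {qf a u | u. ns u = 1}"
    then obtain u where "x = qf a u" "ns u = 1" by blast
    thus "- s/6 - qf b e0 \<le> x" using H[of u e0] ne0 by simp
  qed
  have mle: "m \<le> qf a u" if "ns u = 1" for u
    unfolding m_def by (rule cInf_lower[OF _ bdd]) (use that in \<open>auto simp: S_def\<close>)
  have mge: "- s/6 - qf b v \<le> m" if "ns v = 1" for v
    unfolding m_def
  proof (rule cInf_greatest[OF Sne])
    fix x assume "x \<in> S"
    then obtain u where "x = qf a u" "ns u = 1" unfolding S_def by blast
    thus "- s/6 - qf b v \<le> x" using H[of u v] that by simp
  qed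
  have HA: "m * ns u \<le> qf a u" for u by (rule homog) (rule mle)
  have HB: "(- s/6 - m) * ns v \<le> qf b v" for v by (rule homog) (use mge in force)
  have PA: "m \<le> 0 \<and> sA a \<le> 6 * m^2" by (rule psd3[OF symA trA HA])
  have PB: "- s/6 - m \<le> 0 \<and> sA b \<le> 6 * (- s/6 - m)^2" by (rule psd3[OF symB trB HB])
  have s6: "sqrt 6 * sqrt 6 = 6" by simp
  have sqA: "sqrt (sA a) \<le> sqrt 6 * (- m)"
  proof -
    have "sqrt (sA a) \<le> sqrt (6 * m^2)" using PA by (simp add: real_sqrt_le_mono)
    also have "\<dots> = sqrt 6 * (- m)" using PA by (simp add: real_sqrt_mult)
    finally show ?thesis .
  qed
  have sqB: "sqrt (sA b) \<le> sqrt 6 * (s/6 + m)"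
  proof -
    have "sqrt (sA b) \<le> sqrt (6 * (- s/6 - m)^2)" using PB by (simp add: real_sqrt_le_mono)
    also have "\<dots> = sqrt 6 * (s/6 + m)" using PB by (simp add: real_sqrt_mult)
    finally show ?thesis .
  qed
  have "sqrt (sA a) + sqrt (sA b) \<le> sqrt 6 * (s / 6)" using sqA sqB by (simp add: algebra_simps)
  also have "\<dots> = s / sqrt 6" using s6 by (simp add: field_simps)
  finally show ?thesis using PA PB by linarith
qed
lemma qf_neg: "qf (\<lambda>i j. - a i j) u = - qf a u"
  by (simp add: qf_def sum3)
lemma sA_neg: "sA (\<lambda>i j. - a i j) = sA a"
  by (simp add: sA_def)

theorem proposition2p2:
  fixes M :: "'p set" and R :: "'p \<Rightarrow> tensor4"
  assumes curv: "\<forall>p\<in>M. alg_curv (R p)"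
    and einstein: "\<forall>p\<in>M. einstein_at (R p)"
    and semidef: "(\<forall>p\<in>M. \<forall>x y. lin_indep2 x y \<longrightarrow> sec_curv (R p) x y \<ge> 0)
                \<or> (\<forall>p\<in>M. \<forall>x y. lin_indep2 x y \<longrightarrow> sec_curv (R p) x y \<le> 0)"
  shows "\<forall>p\<in>M. \<bar>scal (R p)\<bar> / sqrt 6 \<ge> norm2form (weyl_plus (R p)) + norm2form (weyl_minus (R p))"
proof
  fix p assume pM: "p \<in> M"
  have AC: "alg_curv (R p)" using curv pM by blast
  have EIN: "einstein_at (R p)" using einstein pM by blast
  have nP: "norm2form (weyl_plus (R p)) = sqrt (sA (WA (R p) 1))"
    unfolding norm2form_def using normWp[OF AC EIN] by simp
  have nM: "norm2form (weyl_minus (R p)) = sqrt (sA (WA (R p) (-1)))"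
    unfolding norm2form_def using normWm[OF AC EIN] by simp
  note symA = WA_sym[OF AC EIN, of _ _ 1] and symB = WA_sym[OF AC EIN, of _ _ "-1"]
  note trA = WA_tr[OF AC EIN, of 1] and trB = WA_tr[OF AC EIN, of "-1"]
  from semidef show "\<bar>scal (R p)\<bar> / sqrt 6 \<ge> norm2form (weyl_plus (R p)) + norm2form (weyl_minus (R p))"
  proof
    assume pos: "\<forall>p\<in>M. \<forall>x y. lin_indep2 x y \<longrightarrow> sec_curv (R p) x y \<ge> 0"
    have H: "0 \<le> scal (R p)/6 + qf (WA (R p) 1) u + qf (WA (R p) (-1)) v"
      if nu: "ns u = 1" and nv: "ns v = 1" for u v
    proof -
      obtain x y where xy: "lin_indep2 x y"
        "sec_curv (R p) x y = scal (R p) / 12 + (qf (WA (R p) 1) u + qf (WA (R p) (-1)) v) / 2"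
        using secL[OF AC EIN nu nv] by blast
      have "0 \<le> sec_curv (R p) x y" using pos pM xy(1) by blast
      thus ?thesis using xy(2) by argo
    qed
    have C: "0 \<le> scal (R p) \<and> sqrt (sA (WA (R p) 1)) + sqrt (sA (WA (R p) (-1))) \<le> scal (R p) / sqrt 6"
      by (rule core[OF symA symB trA trB H])
    thus ?thesis using nP nM by simp
  next
    assume neg: "\<forall>p\<in>M. \<forall>x y. lin_indep2 x y \<longrightarrow> sec_curv (R p) x y \<le> 0"
    have H: "0 \<le> (- scal (R p))/6 + qf (\<lambda>i j. - WA (R p) 1 i j) u + qf (\<lambda>i j. - WA (R p) (-1) i j) v"
      if nu: "ns u = 1" and nv: "ns v = 1" for u v
    proof -
      obtain x y where xy: "lin_indep2 x y"
        "sec_curv (R p) x y = scal (R p) / 12 + (qf (WA (R p) 1) u + qf (WA (R p) (-1)) v) / 2"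
        using secL[OF AC EIN nu nv] by blast
      have "sec_curv (R p) x y \<le> 0" using neg pM xy(1) by blast
      thus ?thesis using xy(2) unfolding qf_neg by argo
    qed
    have sA': "\<And>i j. i < 3 \<Longrightarrow> j < 3 \<Longrightarrow> - WA (R p) 1 i j = - WA (R p) 1 j i"
      "\<And>i j. i < 3 \<Longrightarrow> j < 3 \<Longrightarrow> - WA (R p) (-1) i j = - WA (R p) (-1) j i"
      using symA symB by simp_all
    have tA': "- WA (R p) 1 0 0 + - WA (R p) 1 1 1 + - WA (R p) 1 2 2 = 0" using trA by simp
    have tB': "- WA (R p) (-1) 0 0 + - WA (R p) (-1) 1 1 + - WA (R p) (-1) 2 2 = 0" using trB by simp
    have C: "0 \<le> - scal (R p) \<and> sqrt (sA (\<lambda>i j. - WA (R p) 1 i j)) + sqrt (sA (\<lambda>i j. - WA (R p) (-1) i j))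
        \<le> - scal (R p) / sqrt 6"
      by (rule core[OF sA'(1) sA'(2) tA' tB' H])
    thus ?thesis using nP nM by (simp add: sA_neg)
  qed
qed
end
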